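(* Let $X$ be a connected, finite, simple $3$-valent (resp. $4$-valent) graph equipped with an orientation at each vertex, and for $k\geq 1$ let $X_k=\mathrm{GC}_{k,0}(X)$ be its Goldberg–Coxeter construction with parameters $(k,0)$, with $N_k=|V(X_k)|$ and Laplacian eigenvalues $\lambda_1(X_k)\leq\cdots\leq\lambda_{N_k}(X_k)$. Then for any sequence of positive integers $(m_k)_{k\geq1}$ with $m_k/k^2\to 0$ as $k\to\infty$, the first $m_k$ eigenvalues of $\Delta_{X_k}$ tend to $0$, i.e. $\lambda_{m_k}(X_k)\to 0$, and the last $m_k$ eigenvalues tend to $6$ (resp. $8$), i.e. $\lambda_{N_k-m_k+1}(X_k)\to 6$ in the $3$-valent case (resp. $\to 8$ in the $4$-valent case), as $k\to\infty$.
   Context: Graphs are connected, finite and simple. For a graph $Y$ the (combinatorial) Laplacian acts on $f\in\mathbb{C}^{V(Y)}$ by $(\Delta_Y f)(p)=\deg(p)f(p)-\sum_{q\sim p}f(q)$; its eigenvalues are listed with multiplicity in nondecreasing order. An orientation at each vertex of a $3$- or $4$-valent graph is a cyclic ordering of the edges emanating from each vertex. Goldberg–Coxeter construction ($3$-valent case): let $\omega=e^{\pi i/3}$, so $\mathbb{Z}[\omega]\subset\mathbb{C}$ is the triangular lattice, whose unit triangles are the upward triangles with vertices $a+b\omega,\ a+1+b\omega,\ a+(b+1)\omega$ and the downward triangles with vertices $a+b\omega,\ a+(b+1)\omega,\ a-1+(b+1)\omega$ ($a,b\in\mathbb{Z}$). For $(k,l)\in\mathbb{Z}^2\setminus\{(0,0)\}$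 put $z=k+l\omega$ and let $T$ be the triangle with vertices $0,z,\omega z$. For each $p\in V(X)$ take a copy $\overline{\triangle}(p)$ of the graph whose vertices are the barycenters of the unit lattice triangles meeting the interior of $T$, two barycenters being adjacent when the triangles share an edge; the three sides of $T$ are matched with the three edges at $p$ so that the given cyclic order at $p$ agrees with the counterclockwise order of the sides. For each edge $e=pq$ of $X$, place $\overline{\triangle}(p)$ on $T$ with $e$ corresponding to the side from $z$ to $\omega z$, and place $\overline{\triangle}(q)$ (preserving orientation) on the triangle with vertices $z,(1+\omega)z,\omega z$ with $e$ corresponding to the side from $\omega z$ to $z$; then identify all overlapping vertices and edges. The resulting $3$-valent graph is $\mathrm{GC}_{k,l}(X)$. ($4$-valent case): the same with $\mathbb{Z}[i]$ (square lattice with unit squares), $z=k+li$, the square $S$ with vertices $0,z,(1+i)z,iz$ in place of $T$, barycenters of unit squares meeting the interior of $S$, and for an edge $pq$ the piece of $q$ placed on the adjacent square across the side from $z$ to $(1+i)z$; the result is a $4$-valent graph $\mathrm{GC}_{k,l}(X)$. In particular $\mathrm{GC}_{k,0}(X)$ has $k^2|V(X)|$ vertices. *)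

theory Defs
  imports "Jordan_Normal_Form.Char_Poly" "HOL-Library.Product_Lexorder"
begin

definition simple_graph :: "'a set \<Rightarrow> ('a \<Rightarrow> 'a \<Rightarrow> bool) \<Rightarrow> bool" where
  "simple_graph V E \<longleftrightarrow> finite V \<and> (\<forall>x y. E x y \<longrightarrow> x \<in> V \<and> y \<in> V)
     \<and> (\<forall>x y. E x y \<longrightarrow> E y x) \<and> (\<forall>x. \<not> E x x)"

definition connected_graph :: "'a set \<Rightarrow> ('a \<Rightarrow> 'a \<Rightarrow> bool) \<Rightarrow> bool" where
  "connected_graph V E \<longleftrightarrow> V \<noteq> {} \<and> (\<forall>x\<in>V. \<forall>y\<in>V. E\<^sup>*\<^sup>* x y)"

text \<open>A d-valent graph with an orientation at each vertex: rot p 0, ..., rot p (d-1)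
lists the neighbours of p (each exactly once) in the given cyclic order
(a representative of the cyclic ordering).\<close>
definition oriented_regular :: "nat \<Rightarrow> 'a set \<Rightarrow> ('a \<Rightarrow> 'a \<Rightarrow> bool) \<Rightarrow> ('a \<Rightarrow> nat \<Rightarrow> 'a) \<Rightarrow> bool" where
  "oriented_regular d V E rot \<longleftrightarrow> simple_graph V E \<and> connected_graph V E
     \<and> (\<forall>p\<in>V. bij_betw (rot p) {..<d} {q. E p q})"

text \<open>Generic gluing: each vertex p of X gets a copy of a piece (cells with inner
adjacency cadj); side s (s < d, sides numbered counterclockwise) of the piece of p
corresponds to the edge from p to rot p s.  bnd s i is the cell of the piece lying
along side s at position i (i < k, counted counterclockwise along the side).
Gluing the piece of q to that of p along the common edge, orientation preserving,
reverses the position along the shared side.\<close>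
definition gc_adj ::
  "nat \<Rightarrow> nat \<Rightarrow> 'a set \<Rightarrow> ('a \<Rightarrow> nat \<Rightarrow> 'a) \<Rightarrow> 'c set \<Rightarrow> ('c \<Rightarrow> 'c \<Rightarrow> bool)
     \<Rightarrow> (nat \<Rightarrow> nat \<Rightarrow> 'c) \<Rightarrow> ('a \<times> 'c) \<Rightarrow> ('a \<times> 'c) \<Rightarrow> bool" where
  "gc_adj d k V rot cells cadj bnd x y \<longleftrightarrow>
     fst x \<in> V \<and> fst y \<in> V \<and> snd x \<in> cells \<and> snd y \<in> cells \<and>
     ((fst x = fst y \<and> cadj (snd x) (snd y)) \<or>
      (\<exists>s<d. \<exists>s'<d. \<exists>i<k. rot (fst x) s = fst y \<and> rot (fst y) s' = fst x \<and>
          snd x = bnd s i \<and> snd y = bnd s' (k - 1 - i)))"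

text \<open>Lattice point a + b*omega is encoded as (a,b).  The cell (a,b,True) is the upward
unit triangle with vertices a+b\<omega>, a+1+b\<omega>, a+(b+1)\<omega>; the cell (a,b,False)
is the downward triangle with vertices a+b\<omega>, a+(b+1)\<omega>, a-1+(b+1)\<omega>.\<close>
fun tri_verts :: "int \<times> int \<times> bool \<Rightarrow> (int \<times> int) set" where
  "tri_verts (a, b, True) = {(a, b), (a + 1, b), (a, b + 1)}"
| "tri_verts (a, b, False) = {(a, b), (a, b + 1), (a - 1, b + 1)}"

text \<open>Closed triangle T with vertices 0, k, k\<omega>.  For l = 0 the unit triangles
meeting the interior of T are exactly those contained in T.\<close>
definition tri_T :: "nat \<Rightarrow> (int \<times> int) set" where
  "tri_T k = {(x, y). 0 \<le> x \<and> 0 \<le> y \<and> x + y \<le> int k}"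

definition tri_cells :: "nat \<Rightarrow> (int \<times> int \<times> bool) set" where
  "tri_cells k = {t. tri_verts t \<subseteq> tri_T k}"

definition tri_adj :: "int \<times> int \<times> bool \<Rightarrow> int \<times> int \<times> bool \<Rightarrow> bool" where
  "tri_adj t t' \<longleftrightarrow> t \<noteq> t' \<and> card (tri_verts t \<inter> tri_verts t') = 2"

text \<open>Boundary cells: side 0 is from 0 to k, side 1 from k to k\<omega>, side 2 from k\<omega> to 0.\<close>
definition tri_bnd :: "nat \<Rightarrow> nat \<Rightarrow> nat \<Rightarrow> int \<times> int \<times> bool" where
  "tri_bnd k s i =
     (if s = 0 then (int i, 0, True)
      else if s = 1 then (int k - 1 - int i, int i, True)
      else (0, int k - 1 - int i, True))"

definition GC3_vertices :: "nat \<Rightarrow> 'a set \<Rightarrow> ('a \<times> (int \<times> int \<times> bool)) set" where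
  "GC3_vertices k V = V \<times> tri_cells k"

definition GC3_adj :: "nat \<Rightarrow> 'a set \<Rightarrow> ('a \<Rightarrow> nat \<Rightarrow> 'a)
    \<Rightarrow> ('a \<times> (int \<times> int \<times> bool)) \<Rightarrow> ('a \<times> (int \<times> int \<times> bool)) \<Rightarrow> bool" where
  "GC3_adj k V rot = gc_adj 3 k V rot (tri_cells k) tri_adj (tri_bnd k)"

text \<open>Cell (a,b) is the unit square with lower left corner a + b i.\<close>
definition sq_cells :: "nat \<Rightarrow> (int \<times> int) set" where
  "sq_cells k = {(a, b). 0 \<le> a \<and> a < int k \<and> 0 \<le> b \<and> b < int k}"

definition sq_adj :: "int \<times> int \<Rightarrow> int \<times> int \<Rightarrow> bool" where
  "sq_adj c c' \<longleftrightarrow> \<bar>fst c - fst c'\<bar> + \<bar>snd c - snd c'\<bar> = 1"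

text \<open>Sides: 0 from 0 to k, 1 from k to (1+i)k, 2 from (1+i)k to ik, 3 from ik to 0.\<close>
definition sq_bnd :: "nat \<Rightarrow> nat \<Rightarrow> nat \<Rightarrow> int \<times> int" where
  "sq_bnd k s i =
     (if s = 0 then (int i, 0)
      else if s = 1 then (int k - 1, int i)
      else if s = 2 then (int k - 1 - int i, int k - 1)
      else (0, int k - 1 - int i))"

definition GC4_vertices :: "nat \<Rightarrow> 'a set \<Rightarrow> ('a \<times> (int \<times> int)) set" where
  "GC4_vertices k V = V \<times> sq_cells k"

definition GC4_adj :: "nat \<Rightarrow> 'a set \<Rightarrow> ('a \<Rightarrow> nat \<Rightarrow> 'a)
    \<Rightarrow> ('a \<times> (int \<times> int)) \<Rightarrow> ('a \<times> (int \<times> int)) \<Rightarrow> bool" where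
  "GC4_adj k V rot = gc_adj 4 k V rot (sq_cells k) sq_adj (sq_bnd k)"

definition laplacian_mat :: "'v::linorder set \<Rightarrow> ('v \<Rightarrow> 'v \<Rightarrow> bool) \<Rightarrow> real mat" where
  "laplacian_mat W A =
     (let vs = sorted_list_of_set W in
      mat (card W) (card W) (\<lambda>(i, j).
        if i = j then real (card {z \<in> W. A (vs ! i) z})
        else if A (vs ! i) (vs ! j) then -1 else 0))"

definition lap_eigs :: "'v::linorder set \<Rightarrow> ('v \<Rightarrow> 'v \<Rightarrow> bool) \<Rightarrow> real list" where
  "lap_eigs W A = (THE xs. sorted xs \<and>
      char_poly (laplacian_mat W A) = (\<Prod>x\<leftarrow>xs. [:- x, 1:]))"

text \<open>The j-th eigenvalue (1-indexed) \<lambda>_j.\<close>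
definition lap_eig :: "'v::linorder set \<Rightarrow> ('v \<Rightarrow> 'v \<Rightarrow> bool) \<Rightarrow> nat \<Rightarrow> real" where
  "lap_eig W A j = lap_eigs W A ! (j - 1)"

end

theory Submission
  imports Defs
begin

lemma real_eig_exists:
  fixes A :: "real mat"
  assumes A: "A \<in> carrier_mat n n" and sym: "A\<^sup>T = A" and n: "0 < n"
  shows "\<exists>e. eigenvalue A e"
proof -
  let ?C = "map_mat complex_of_real A"
  have C: "?C \<in> carrier_mat n n" using A by auto
  obtain as where cp: "char_poly ?C = (\<Prod>a\<leftarrow>as. [:- a, 1:])" and len: "length as = n"
    using char_poly_factorized[OF C] by blast
  obtain a rest where as: "as = a # rest" using len n by (cases as) auto
  have "poly (char_poly ?C) a = 0" unfolding cp as by simp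
  hence "eigenvalue ?C a" using eigenvalue_root_char_poly[OF C] by simp
  then obtain v where ev: "eigenvector ?C v a" unfolding eigenvalue_def by blast
  have v: "v \<in> carrier_vec n" and v0: "v \<noteq> 0\<^sub>v n" and Cv: "?C *\<^sub>v v = a \<cdot>\<^sub>v v"
    using ev A unfolding eigenvector_def by auto
  have Asym: "\<And>i j. i < n \<Longrightarrow> j < n \<Longrightarrow> A $$ (i,j) = A $$ (j,i)"
    by (metis A carrier_matD(1,2) index_transpose_mat(1) sym)
  define s where "s = (\<Sum>i<n. cnj (v$i) * (?C *\<^sub>v v)$i)"
  define N where "N = (\<Sum>i<n. cnj (v$i) * v$i)"
  have s1: "s = a * N" unfolding s_def N_def Cv using v
    by (simp add: sum_distrib_left algebra_simps)
  have s2: "s = (\<Sum>i<n. \<Sum>j<n. cnj (v$i) * of_real (A $$ (i,j)) * v$j)"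
    unfolding s_def using A v
    by (simp add: scalar_prod_def sum_distrib_left algebra_simps atLeast0LessThan)
  have "cnj s = (\<Sum>i<n. \<Sum>j<n. v$i * of_real (A $$ (i,j)) * cnj (v$j))"
    unfolding s2 by (simp add: cnj_sum)
  also have "\<dots> = (\<Sum>j<n. \<Sum>i<n. v$i * of_real (A $$ (i,j)) * cnj (v$j))"
    by (rule sum.swap)
  also have "\<dots> = s" unfolding s2
    by (intro sum.cong refl, simp add: Asym mult.commute mult.left_commute)
  finally have cs: "cnj s = s" .
  have Nreal: "cnj N = N" unfolding N_def by (simp add: cnj_sum mult.commute)
  have Npos: "N \<noteq> 0"
  proof
    assume N0: "N = 0"
    have "Re N = (\<Sum>i<n. (cmod (v$i))\<^sup>2)" unfolding N_def
      by (simp add: Re_sum complex_mult_cnj[symmetric] cmod_power2, simp add: power2_eq_square)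
    hence "(\<Sum>i<n. (cmod (v$i))\<^sup>2) = 0" using N0 by simp
    hence "\<forall>i\<in>{..<n}. (cmod (v$i))\<^sup>2 = 0" by (subst (asm) sum_nonneg_eq_0_iff) auto
    hence "v = 0\<^sub>v n" using v by (intro eq_vecI) auto
    with v0 show False by simp
  qed
  have "cnj a = a"
  proof -
    have "cnj a * N = a * N" using cs Nreal unfolding s1 by (metis complex_cnj_mult)
    thus ?thesis using Npos by simp
  qed
  hence areal: "a = of_real (Re a)" by (metis Reals_cnj_iff complex_is_Real_iff of_real_Re)
  have "poly (map_poly of_real (char_poly A)) (of_real (Re a)) = (0::complex)"
    using \<open>poly (char_poly ?C) a = 0\<close> areal of_real_hom.char_poly_hom[OF A] by metis
  hence "poly (char_poly A) (Re a) = 0" by (simp add: of_real_hom.poly_map_poly)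
  thus ?thesis using eigenvalue_root_char_poly[OF A] by blast
qed

lemma householder:
  fixes v :: "real vec"
  assumes v: "v \<in> carrier_vec n" and u: "v \<bullet> v = 1" and v0: "v$0 \<le> 0" and n: "0 < n"
  shows "\<exists>H. H \<in> carrier_mat n n \<and> H\<^sup>T = H \<and> H * H = 1\<^sub>m n \<and> col H 0 = v"
proof -
  define w where "w = vec n (\<lambda>i. v$i - (if i = 0 then 1 else 0))"
  have w: "w \<in> carrier_vec n" unfolding w_def by simp
  have wi: "\<And>i. i < n \<Longrightarrow> w$i = v$i - (if i = 0 then 1 else 0)" unfolding w_def by simp
  have vv: "(\<Sum>i<n. v$i * v$i) = 1" using u v by (simp add: scalar_prod_def atLeast0LessThan)
  define S where "S = (\<Sum>i<n. w$i * w$i)"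
  have "S = (\<Sum>i<n. v$i * v$i - 2 * (if i = 0 then v$i else 0) + (if i = 0 then 1 else 0))"
    unfolding S_def by (intro sum.cong refl, simp add: wi algebra_simps)
  also have "\<dots> = 2 - 2 * v$0" using n
    by (simp add: sum.distrib sum_subtractf vv sum_distrib_left[symmetric])
  finally have S: "S = 2 - 2 * v$0" .
  have Spos: "S > 0" using S v0 by simp
  define c where "c = 2 / S"
  have cS: "c * S = 2" using Spos unfolding c_def by simp
  have cw0: "c * w$0 = -1" using n Spos unfolding c_def wi[OF n] S by (simp add: field_simps)
  define H where "H = mat n n (\<lambda>(i,j). (if i = j then 1 else 0) - c * w$i * w$j)"
  have H: "H \<in> carrier_mat n n" unfolding H_def by simp
  have Hij: "\<And>i j. i < n \<Longrightarrow> j < n \<Longrightarrow> H $$ (i,j) = (if i = j then 1 else 0) - c * w$i * w$j"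
    unfolding H_def by simp
  have HT: "H\<^sup>T = H" by (rule eq_matI, insert H, auto simp: Hij)
  have HH: "H * H = 1\<^sub>m n"
  proof (rule eq_matI)
    fix i j assume i: "i < dim_row (1\<^sub>m n)" and j: "j < dim_col (1\<^sub>m n)"
    hence i: "i < n" and j: "j < n" by auto
    have "(H * H) $$ (i,j) = (\<Sum>k<n. H $$ (i,k) * H $$ (k,j))"
      using H i j by (simp add: scalar_prod_def atLeast0LessThan)
    also have "\<dots> = (\<Sum>k<n. (if k = i then (if k = j then 1 else 0) else 0)
        - (if k = j then c * w$i * w$j else 0) - (if k = i then c * w$i * w$j else 0)
        + c * c * w$i * w$j * (w$k * w$k))"
      by (intro sum.cong refl, simp add: Hij i j algebra_simps)
    also have "\<dots> = (if i = j then 1 else 0) - c * w$i * w$j - c * w$i * w$j + c * c * w$i * w$j * S"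
      using i j unfolding S_def
      by (simp add: sum.distrib sum_subtractf sum_distrib_left[symmetric])
    also have "\<dots> = (if i = j then 1 else 0)"
      using cS by (simp add: algebra_simps)
    finally show "(H * H) $$ (i,j) = 1\<^sub>m n $$ (i,j)" using i j by simp
  qed (insert H, auto)
  have cH: "col H 0 = v"
  proof (rule eq_vecI)
    fix i assume "i < dim_vec v"
    hence i: "i < n" using v by auto
    have "col H 0 $ i = (if i = 0 then 1 else 0) - (c * w$0) * w$i"
      using H i n by (simp add: Hij algebra_simps)
    also have "\<dots> = v$i" unfolding cw0 using i by (simp add: wi)
    finally show "col H 0 $ i = v $ i" .
  qed (insert H v, auto)
  show ?thesis using H HT HH cH by blast
qed

lemma unit_eigvec:
  fixes A :: "real mat"
  assumes A: "A \<in> carrier_mat n n" and e: "eigenvalue A e"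
  shows "\<exists>u. u \<in> carrier_vec n \<and> u \<bullet> u = 1 \<and> u$0 \<le> 0 \<and> A *\<^sub>v u = e \<cdot>\<^sub>v u"
proof -
  define v where "v = find_eigenvector A e"
  have ev: "eigenvector A v e" unfolding v_def by (rule find_eigenvector[OF A e])
  have v: "v \<in> carrier_vec n" and v0: "v \<noteq> 0\<^sub>v n" and Av: "A *\<^sub>v v = e \<cdot>\<^sub>v v"
    using ev A unfolding eigenvector_def by auto
  have vv: "v \<bullet> v = (\<Sum>i<n. (v$i)\<^sup>2)" using v by (simp add: scalar_prod_def atLeast0LessThan power2_eq_square)
  have vpos: "v \<bullet> v > 0"
  proof -
    obtain i where i: "i < n" and vi: "v$i \<noteq> 0" using v v0 by (metis eq_vecI carrier_vecD index_zero_vec)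
    have "(v$i)\<^sup>2 \<le> (\<Sum>i<n. (v$i)\<^sup>2)" using i by (intro member_le_sum) auto
    moreover have "(v$i)\<^sup>2 > 0" using vi by simp
    ultimately show ?thesis unfolding vv by linarith
  qed
  define s where "s = (if v$0 \<le> 0 then 1 else -1) / sqrt (v \<bullet> v)"
  define u where "u = s \<cdot>\<^sub>v v"
  have s2: "s * s * (v \<bullet> v) = 1" unfolding s_def using vpos
    by (simp add: field_simps)
  have u: "u \<in> carrier_vec n" unfolding u_def using v by simp
  have uu: "u \<bullet> u = 1" unfolding u_def using v s2
    by (simp add: smult_scalar_prod_distrib scalar_prod_smult_distrib mult.assoc)
  have u0: "u$0 \<le> 0"
  proof (cases "n = 0")
    case True thus ?thesis using v0 v by (metis carrier_vecD eq_vecI index_zero_vec(2) less_nat_zero_code)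
  next
    case False
    hence "u$0 = s * v$0" unfolding u_def using v by simp
    thus ?thesis unfolding s_def using vpos by (auto simp: divide_nonpos_pos)
  qed
  have Au: "A *\<^sub>v u = e \<cdot>\<^sub>v u" unfolding u_def using A v Av
    by (simp add: mult_mat_vec smult_smult_assoc mult.commute)
  show ?thesis using u uu u0 Au by blast
qed

lemma spectral:
  fixes A :: "real mat"
  assumes "A \<in> carrier_mat n n" and "A\<^sup>T = A"
  shows "\<exists>U D. U \<in> carrier_mat n n \<and> D \<in> carrier_mat n n \<and> U\<^sup>T * U = 1\<^sub>m n
     \<and> diagonal_mat D \<and> U\<^sup>T * A * U = D"
  using assms
proof (induction n arbitrary: A)
  case 0
  show ?case
    by (rule exI[of _ "1\<^sub>m 0"], rule exI[of _ "0\<^sub>m 0 0"], insert 0, auto simp: diagonal_mat_def intro!: eq_matI)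
next
  case (Suc n')
  let ?n = "Suc n'"
  have A: "A \<in> carrier_mat ?n ?n" and sym: "A\<^sup>T = A" using Suc.prems by auto
  obtain e where e: "eigenvalue A e" using real_eig_exists[OF A sym] by auto
  obtain u where u: "u \<in> carrier_vec ?n" and uu: "u \<bullet> u = 1" and u0: "u$0 \<le> 0"
    and Au: "A *\<^sub>v u = e \<cdot>\<^sub>v u" using unit_eigvec[OF A e] by blast
  obtain H where H: "H \<in> carrier_mat ?n ?n" and HT: "H\<^sup>T = H" and HH: "H * H = 1\<^sub>m ?n"
    and Hu: "col H 0 = u" using householder[OF u uu u0] by auto
  define A' where "A' = H * A * H"
  have A': "A' \<in> carrier_mat ?n ?n" unfolding A'_def using H A by auto
  have A'T: "A'\<^sup>T = A'"
  proof -
    have "A'\<^sup>T = H\<^sup>T * (H * A)\<^sup>T" unfolding A'_def using H A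
      by (intro transpose_mult[of _ ?n ?n]) auto
    also have "(H * A)\<^sup>T = A\<^sup>T * H\<^sup>T" using H A by (intro transpose_mult[of _ ?n ?n]) auto
    finally show ?thesis unfolding A'_def HT sym using H A by (simp add: assoc_mult_mat[of _ ?n ?n])
  qed
  have colA': "col A' 0 = e \<cdot>\<^sub>v unit_vec ?n 0"
  proof -
    have "col A' 0 = (H * A) *\<^sub>v col H 0" unfolding A'_def using H A
      by (intro col_mult2[of _ ?n ?n]) auto
    also have "\<dots> = H *\<^sub>v (A *\<^sub>v u)" unfolding Hu using H A u by (simp add: assoc_mult_mat_vec)
    also have "\<dots> = e \<cdot>\<^sub>v (H *\<^sub>v col H 0)" unfolding Au Hu using H u by (simp add: mult_mat_vec)
    also have "H *\<^sub>v col H 0 = col (H * H) 0" using col_mult2[OF H H, of 0] by simp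
    also have "\<dots> = unit_vec ?n 0" unfolding HH by simp
    finally show ?thesis .
  qed
  have A'i0: "\<And>i. i < ?n \<Longrightarrow> A' $$ (i,0) = (if i = 0 then e else 0)"
  proof -
    fix i assume i: "i < ?n"
    have "A' $$ (i,0) = col A' 0 $ i" using A' i by simp
    thus "A' $$ (i,0) = (if i = 0 then e else 0)" unfolding colA' using i by simp
  qed
  have A'sym: "\<And>i j. i < ?n \<Longrightarrow> j < ?n \<Longrightarrow> A' $$ (i,j) = A' $$ (j,i)"
    by (metis A' A'T carrier_matD(1,2) index_transpose_mat(1))
  define A1 where "A1 = mat 1 1 (\<lambda>_. e)"
  define A3 where "A3 = mat n' n' (\<lambda>(i,j). A' $$ (Suc i, Suc j))"
  have A1: "A1 \<in> carrier_mat 1 1" unfolding A1_def by simp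
  have A3: "A3 \<in> carrier_mat n' n'" unfolding A3_def by simp
  have A3T: "A3\<^sup>T = A3"
  proof (rule eq_matI)
    fix i j assume "i < dim_row A3" "j < dim_col A3"
    hence i: "i < n'" and j: "j < n'" using A3 by auto
    show "A3\<^sup>T $$ (i,j) = A3 $$ (i,j)" using i j A'sym[of "Suc i" "Suc j"] by (simp add: A3_def)
  qed (insert A3, auto)
  have blk: "A' = four_block_mat A1 (0\<^sub>m 1 n') (0\<^sub>m n' 1) A3"
  proof (rule eq_matI)
    fix i j assume "i < dim_row (four_block_mat A1 (0\<^sub>m 1 n') (0\<^sub>m n' 1) A3)"
      "j < dim_col (four_block_mat A1 (0\<^sub>m 1 n') (0\<^sub>m n' 1) A3)"
    hence i: "i < ?n" and j: "j < ?n" using A1 A3 by auto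
    show "A' $$ (i,j) = four_block_mat A1 (0\<^sub>m 1 n') (0\<^sub>m n' 1) A3 $$ (i,j)"
    proof (cases "i = 0 \<or> j = 0")
      case True
      thus ?thesis
      proof
        assume "i = 0" thus ?thesis using A'i0[of 0] A'sym[of 0 j] A'i0[of j] i j A1 A3 by (auto simp: A1_def)
      next
        assume "j = 0" thus ?thesis using A'i0[of i] i j A1 A3 by (auto simp: A1_def)
      qed
    next
      case False
      then obtain i' j' where "i = Suc i'" "j = Suc j'" by (metis not0_implies_Suc)
      thus ?thesis using i j A1 A3 by (simp add: A3_def)
    qed
  qed (insert A' A1 A3, auto)
  obtain U3 D3 where U3: "U3 \<in> carrier_mat n' n'" and D3: "D3 \<in> carrier_mat n' n'"
    and UU3: "U3\<^sup>T * U3 = 1\<^sub>m n'" and dD3: "diagonal_mat D3" and UAU3: "U3\<^sup>T * A3 * U3 = D3"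
    using Suc.IH[OF A3 A3T] by blast
  define P where "P = four_block_mat (1\<^sub>m 1) (0\<^sub>m 1 n') (0\<^sub>m n' 1) U3"
  have P: "P \<in> carrier_mat ?n ?n" unfolding P_def using U3 by auto
  have PT: "P\<^sup>T = four_block_mat (1\<^sub>m 1) (0\<^sub>m 1 n') (0\<^sub>m n' 1) U3\<^sup>T"
    unfolding P_def using U3 by (simp add: transpose_four_block_mat[of _ 1 1 _ n' _ n'])
  define U where "U = H * P"
  define D where "D = four_block_mat A1 (0\<^sub>m 1 n') (0\<^sub>m n' 1) D3"
  have U: "U \<in> carrier_mat ?n ?n" unfolding U_def using H P by auto
  have D: "D \<in> carrier_mat ?n ?n" unfolding D_def using A1 D3 by auto
  have UT: "U\<^sup>T = P\<^sup>T * H" unfolding U_def using H P HT by (simp add: transpose_mult[of _ ?n ?n])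
  have PTP: "P\<^sup>T * P = 1\<^sub>m ?n"
  proof -
    have "P\<^sup>T * P = four_block_mat (1\<^sub>m 1 * 1\<^sub>m 1 + 0\<^sub>m 1 n' * 0\<^sub>m n' 1)
       (1\<^sub>m 1 * 0\<^sub>m 1 n' + 0\<^sub>m 1 n' * U3) (0\<^sub>m n' 1 * 1\<^sub>m 1 + U3\<^sup>T * 0\<^sub>m n' 1)
       (0\<^sub>m n' 1 * 0\<^sub>m 1 n' + U3\<^sup>T * U3)"
      unfolding PT by (unfold P_def, rule mult_four_block_mat) (use U3 in auto)
    also have "\<dots> = four_block_mat (1\<^sub>m 1) (0\<^sub>m 1 n') (0\<^sub>m n' 1) (1\<^sub>m n')"
      unfolding UU3 using U3 by (intro cong_four_block_mat) auto
    also have "\<dots> = 1\<^sub>m ?n" by simp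
    finally show ?thesis .
  qed
  have "U\<^sup>T * U = P\<^sup>T * H * (H * P)" unfolding UT by (simp add: U_def)
  also have "\<dots> = P\<^sup>T * (H * H) * P" using H P
    by (simp add: assoc_mult_mat[of _ ?n ?n _ ?n _ ?n])
  also have "\<dots> = 1\<^sub>m ?n" unfolding HH using P PTP by simp
  finally have UU: "U\<^sup>T * U = 1\<^sub>m ?n" .
  have "U\<^sup>T * A * U = P\<^sup>T * H * A * (H * P)" unfolding UT by (simp add: U_def)
  also have "\<dots> = P\<^sup>T * A' * P" unfolding A'_def using H P A
    by (simp add: assoc_mult_mat[of _ ?n ?n _ ?n _ ?n])
  also have "\<dots> = four_block_mat (1\<^sub>m 1 * A1 + 0\<^sub>m 1 n' * 0\<^sub>m n' 1)
       (1\<^sub>m 1 * 0\<^sub>m 1 n' + 0\<^sub>m 1 n' * A3) (0\<^sub>m n' 1 * A1 + U3\<^sup>T * 0\<^sub>m n' 1)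
       (0\<^sub>m n' 1 * 0\<^sub>m 1 n' + U3\<^sup>T * A3) * P"
    unfolding PT blk by (subst mult_four_block_mat) (use U3 A1 A3 in auto)
  also have "\<dots> = four_block_mat A1 (0\<^sub>m 1 n') (0\<^sub>m n' 1) (U3\<^sup>T * A3) * P"
    using U3 A1 A3 by (intro arg_cong2[where f="(*)"] cong_four_block_mat refl) auto
  also have "\<dots> = four_block_mat (A1 * 1\<^sub>m 1 + 0\<^sub>m 1 n' * 0\<^sub>m n' 1)
       (A1 * 0\<^sub>m 1 n' + 0\<^sub>m 1 n' * U3) (0\<^sub>m n' 1 * 1\<^sub>m 1 + (U3\<^sup>T * A3) * 0\<^sub>m n' 1)
       (0\<^sub>m n' 1 * 0\<^sub>m 1 n' + (U3\<^sup>T * A3) * U3)"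
    unfolding P_def by (rule mult_four_block_mat) (use U3 A1 A3 in auto)
  also have "\<dots> = D" unfolding D_def UAU3[symmetric] using U3 A1 A3
    by (intro cong_four_block_mat) auto
  finally have UAU: "U\<^sup>T * A * U = D" .
  have dD: "diagonal_mat D" using dD3 A1 D3 unfolding D_def diagonal_mat_def
    by (auto simp: A1_def)
  show ?case using U D UU dD UAU by blast
qed

lemma homog_system:
  fixes C :: "'i \<Rightarrow> 'j \<Rightarrow> real"
  assumes "finite I" "finite J" "card I < card J"
  shows "\<exists>a. (\<exists>j\<in>J. a j \<noteq> 0) \<and> (\<forall>i\<in>I. (\<Sum>j\<in>J. C i j * a j) = 0)"
  using assms
proof (induction I arbitrary: J C rule: finite_induct)
  case empty
  then obtain j where "j \<in> J" by (metis card.empty card_gt_0_iff ex_in_conv)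
  thus ?case by (intro exI[of _ "\<lambda>_. 1"]) auto
next
  case (insert i0 I)
  show ?case
  proof (cases "\<forall>j\<in>J. C i0 j = 0")
    case True
    have "card I < card J" using insert by simp
    then obtain a where a: "\<exists>j\<in>J. a j \<noteq> 0" "\<forall>i\<in>I. (\<Sum>j\<in>J. C i j * a j) = 0"
      using insert.IH[OF insert.prems(1)] by blast
    thus ?thesis using True by (intro exI[of _ a]) auto
  next
    case False
    then obtain j0 where j0: "j0 \<in> J" and c0: "C i0 j0 \<noteq> 0" by blast
    define J' where "J' = J - {j0}"
    define C' where "C' = (\<lambda>i j. C i j - C i j0 * C i0 j / C i0 j0)"
    have fJ': "finite J'" unfolding J'_def using insert by simp
    have cJ': "card I < card J'" unfolding J'_def using insert j0 by (simp add: card_Diff_singleton)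
    obtain a' where a'1: "\<exists>j\<in>J'. a' j \<noteq> 0" and a'2: "\<forall>i\<in>I. (\<Sum>j\<in>J'. C' i j * a' j) = 0"
      using insert.IH[OF fJ' cJ'] by blast
    define a where "a = (\<lambda>j. if j = j0 then - (\<Sum>j\<in>J'. C i0 j * a' j) / C i0 j0 else a' j)"
    have Jsplit: "\<And>f. (\<Sum>j\<in>J. f j) = f j0 + (\<Sum>j\<in>J'. f j)"
      unfolding J'_def using insert j0 by (simp add: sum.remove)
    have aJ': "\<And>f. (\<Sum>j\<in>J'. f j * a j) = (\<Sum>j\<in>J'. f j * a' j)"
      unfolding a_def J'_def by (intro sum.cong) auto
    have "\<exists>j\<in>J. a j \<noteq> 0"
    proof -
      obtain j where "j \<in> J'" "a' j \<noteq> 0" using a'1 by blast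
      thus ?thesis unfolding J'_def by (intro bexI[of _ j]) (auto simp: a_def)
    qed
    moreover have "(\<Sum>j\<in>J. C i0 j * a j) = 0"
      unfolding Jsplit aJ' using c0 by (simp add: a_def)
    moreover have "(\<Sum>j\<in>J. C i j * a j) = 0" if i: "i \<in> I" for i
    proof -
      have "(\<Sum>j\<in>J. C i j * a j) = C i j0 * a j0 + (\<Sum>j\<in>J'. C i j * a' j)"
        unfolding Jsplit aJ' ..
      also have "\<dots> = (\<Sum>j\<in>J'. C' i j * a' j)"
        using c0 by (simp add: a_def C'_def sum_distrib_left sum_subtractf sum_divide_distrib
            algebra_simps)
      also have "\<dots> = 0" using a'2 i by blast
      finally show ?thesis .
    qed
    ultimately show ?thesis by blast
  qed
qed

lemma triple_swap:
  fixes f g :: "nat \<Rightarrow> nat \<Rightarrow> real"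
  shows "(\<Sum>k<n. (\<Sum>i<n. f i k) * (\<Sum>l<n. g l k)) = (\<Sum>i<n. \<Sum>l<n. \<Sum>k<n. f i k * g l k)"
proof -
  have "(\<Sum>k<n. (\<Sum>i<n. f i k) * (\<Sum>l<n. g l k)) = (\<Sum>k<n. \<Sum>i<n. \<Sum>l<n. f i k * g l k)"
    by (simp add: sum_product)
  also have "\<dots> = (\<Sum>i<n. \<Sum>k<n. \<Sum>l<n. f i k * g l k)" by (rule sum.swap)
  also have "\<dots> = (\<Sum>i<n. \<Sum>l<n. \<Sum>k<n. f i k * g l k)" by (rule sum.cong[OF refl], rule sum.swap)
  finally show ?thesis .
qed

lemma minmax:
  fixes U M :: "nat \<Rightarrow> nat \<Rightarrow> real" and e :: "nat \<Rightarrow> real" and y :: "nat \<Rightarrow> nat \<Rightarrow> real"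
  assumes rows: "\<And>i j. i < n \<Longrightarrow> j < n \<Longrightarrow> (\<Sum>k<n. U i k * U j k) = (if i = j then 1 else 0)"
    and M: "\<And>i j. i < n \<Longrightarrow> j < n \<Longrightarrow> M i j = (\<Sum>k<n. U i k * e k * U j k)"
    and indep: "\<And>a. (\<forall>i<n. (\<Sum>j<m. a j * y j i) = 0) \<Longrightarrow> (\<forall>j<m. a j = 0)"
    and ray: "\<And>a. (\<Sum>i<n. \<Sum>l<n. (\<Sum>j<m. a j * y j i) * M i l * (\<Sum>j<m. a j * y j l))
                  \<le> c * (\<Sum>i<n. (\<Sum>j<m. a j * y j i)\<^sup>2)"
  shows "m \<le> card {k. k < n \<and> e k \<le> c}"
proof (rule ccontr)
  assume "\<not> ?thesis"
  hence lt: "card {k. k < n \<and> e k \<le> c} < card {..<m}" by simp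
  define K where "K = {k. k < n \<and> e k \<le> c}"
  obtain a where a1: "\<exists>j\<in>{..<m}. a j \<noteq> 0"
    and a2: "\<forall>k\<in>K. (\<Sum>j\<in>{..<m}. (\<Sum>i<n. U i k * y j i) * a j) = 0"
    using homog_system[of K "{..<m}" "\<lambda>k j. \<Sum>i<n. U i k * y j i"] lt unfolding K_def by auto
  define z where "z = (\<lambda>i. \<Sum>j<m. a j * y j i)"
  define w where "w = (\<lambda>k. \<Sum>i<n. U i k * z i)"
  have wK: "w k = 0" if "k \<in> K" for k
  proof -
    have "w k = (\<Sum>i<n. \<Sum>j<m. U i k * y j i * a j)"
      unfolding w_def z_def by (simp add: sum_distrib_left mult_ac)
    also have "\<dots> = (\<Sum>j<m. \<Sum>i<n. U i k * y j i * a j)" by (rule sum.swap)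
    also have "\<dots> = (\<Sum>j<m. (\<Sum>i<n. U i k * y j i) * a j)" by (simp add: sum_distrib_right)
    finally have "w k = (\<Sum>j<m. (\<Sum>i<n. U i k * y j i) * a j)" .
    thus ?thesis using a2 that by simp
  qed
  have zz: "(\<Sum>i<n. (z i)\<^sup>2) = (\<Sum>k<n. (w k)\<^sup>2)"
  proof -
    have "(\<Sum>k<n. (w k)\<^sup>2) = (\<Sum>i<n. \<Sum>l<n. \<Sum>k<n. (U i k * z i) * (U l k * z l))"
      unfolding w_def power2_eq_square by (rule triple_swap)
    also have "\<dots> = (\<Sum>i<n. \<Sum>l<n. z i * z l * (\<Sum>k<n. U i k * U l k))"
      by (simp add: sum_distrib_left mult_ac)
    also have "\<dots> = (\<Sum>i<n. \<Sum>l<n. if l = i then z i * z l else 0)"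
      by (intro sum.cong refl, simp add: rows)
    also have "\<dots> = (\<Sum>i<n. (z i)\<^sup>2)" by (simp add: power2_eq_square)
    finally show ?thesis by simp
  qed
  have zMz: "(\<Sum>i<n. \<Sum>l<n. z i * M i l * z l) = (\<Sum>k<n. e k * (w k)\<^sup>2)"
  proof -
    have "(\<Sum>k<n. e k * (w k)\<^sup>2) = (\<Sum>k<n. (\<Sum>i<n. U i k * e k * z i) * (\<Sum>l<n. U l k * z l))"
      unfolding w_def power2_eq_square by (simp add: sum_distrib_left mult_ac)
    also have "\<dots> = (\<Sum>i<n. \<Sum>l<n. \<Sum>k<n. (U i k * e k * z i) * (U l k * z l))"
      by (rule triple_swap)
    also have "\<dots> = (\<Sum>i<n. \<Sum>l<n. z i * z l * (\<Sum>k<n. U i k * e k * U l k))"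
      by (simp add: sum_distrib_left mult_ac)
    also have "\<dots> = (\<Sum>i<n. \<Sum>l<n. z i * M i l * z l)"
      by (intro sum.cong refl, simp add: M algebra_simps)
    finally show ?thesis by simp
  qed
  have znz: "\<exists>i<n. z i \<noteq> 0"
  proof (rule ccontr)
    assume "\<not> ?thesis"
    hence "\<forall>i<n. (\<Sum>j<m. a j * y j i) = 0" unfolding z_def by auto
    hence "\<forall>j<m. a j = 0" by (rule indep)
    thus False using a1 by auto
  qed
  have "(\<Sum>k<n. (w k)\<^sup>2) > 0"
  proof -
    obtain i where i: "i < n" "z i \<noteq> 0" using znz by blast
    have "(z i)\<^sup>2 \<le> (\<Sum>i<n. (z i)\<^sup>2)" using i by (intro member_le_sum) auto
    thus ?thesis using i zz by (smt (verit) zero_less_power2)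
  qed
  then obtain k0 where k0: "k0 < n" "w k0 \<noteq> 0"
    by (metis (no_types, lifting) less_irrefl lessThan_iff power_zero_numeral sum.neutral)
  have "e k0 > c" using wK[of k0] k0 unfolding K_def by force
  have "(\<Sum>k<n. (e k - c) * (w k)\<^sup>2) > 0"
  proof (rule sum_pos2[of _ k0])
    show "(e k0 - c) * (w k0)\<^sup>2 > 0" using \<open>e k0 > c\<close> k0 by simp
    show "\<And>k. k \<in> {..<n} \<Longrightarrow> 0 \<le> (e k - c) * (w k)\<^sup>2"
    proof -
      fix k assume "k \<in> {..<n}"
      show "0 \<le> (e k - c) * (w k)\<^sup>2"
      proof (cases "e k \<le> c")
        case True thus ?thesis using wK[of k] \<open>k \<in> {..<n}\<close> unfolding K_def by simp
      next
        case False thus ?thesis by simp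
      qed
    qed
  qed (use k0 in auto)
  hence "(\<Sum>k<n. e k * (w k)\<^sup>2) > c * (\<Sum>k<n. (w k)\<^sup>2)"
    by (simp add: algebra_simps sum_subtractf sum_distrib_left)
  moreover have "(\<Sum>i<n. \<Sum>l<n. z i * M i l * z l) \<le> c * (\<Sum>i<n. (z i)\<^sup>2)"
    using ray[of a] unfolding z_def .
  ultimately show False unfolding zMz zz by simp
qed

lemma spectral_fun:
  fixes A :: "real mat"
  assumes A: "A \<in> carrier_mat n n" and sym: "A\<^sup>T = A"
  shows "\<exists>U e. (\<forall>i<n. \<forall>j<n. (\<Sum>k<n. U i k * U j k) = (if i = j then 1 else 0)) \<and>
     (\<forall>i<n. \<forall>j<n. (\<Sum>k<n. U k i * U k j) = (if i = j then 1 else 0)) \<and>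
     (\<forall>i<n. \<forall>j<n. A $$ (i,j) = (\<Sum>k<n. U i k * e k * U j k)) \<and>
     char_poly A = (\<Prod>k\<leftarrow>[0..<n]. [:- e k, 1:])"
proof -
  obtain U D where U: "U \<in> carrier_mat n n" and D: "D \<in> carrier_mat n n" and UU: "U\<^sup>T * U = 1\<^sub>m n"
    and dD: "diagonal_mat D" and UAU: "U\<^sup>T * A * U = D"
    using spectral[OF A sym] by blast
  have UT: "U\<^sup>T \<in> carrier_mat n n" using U by simp
  have UUT: "U * U\<^sup>T = 1\<^sub>m n" using mat_mult_left_right_inverse[OF UT U UU] .
  have AD: "A = U * D * U\<^sup>T"
  proof -
    have "U * D * U\<^sup>T = U * (U\<^sup>T * A * U) * U\<^sup>T" unfolding UAU ..
    also have "\<dots> = (U * U\<^sup>T) * A * (U * U\<^sup>T)" using U A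
      by (simp add: assoc_mult_mat[of _ n n _ n _ n])
    also have "\<dots> = A" unfolding UUT using A by simp
    finally show ?thesis by simp
  qed
  define e where "e = (\<lambda>k. D $$ (k,k))"
  define V where "V = (\<lambda>i k. U $$ (i,k))"
  have rows: "\<forall>i<n. \<forall>j<n. (\<Sum>k<n. V i k * V j k) = (if i = j then 1 else 0)"
  proof (intro allI impI)
    fix i j assume i: "i < n" and j: "j < n"
    have "(U * U\<^sup>T) $$ (i,j) = (\<Sum>k<n. V i k * V j k)"
      using U i j by (simp add: V_def scalar_prod_def atLeast0LessThan)
    thus "(\<Sum>k<n. V i k * V j k) = (if i = j then 1 else 0)" unfolding UUT using i j by simp
  qed
  have cols: "\<forall>i<n. \<forall>j<n. (\<Sum>k<n. V k i * V k j) = (if i = j then 1 else 0)"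
  proof (intro allI impI)
    fix i j assume i: "i < n" and j: "j < n"
    have "(U\<^sup>T * U) $$ (i,j) = (\<Sum>k<n. V k i * V k j)"
      using U i j by (simp add: V_def scalar_prod_def atLeast0LessThan)
    thus "(\<Sum>k<n. V k i * V k j) = (if i = j then 1 else 0)" unfolding UU using i j by simp
  qed
  have ent: "\<forall>i<n. \<forall>j<n. A $$ (i,j) = (\<Sum>k<n. V i k * e k * V j k)"
  proof (intro allI impI)
    fix i j assume i: "i < n" and j: "j < n"
    have "A $$ (i,j) = (\<Sum>k<n. U $$ (i,k) * (\<Sum>l<n. D $$ (k,l) * U $$ (j,l)))"
      using U D i j by (subst AD) (simp add: scalar_prod_def atLeast0LessThan)
    also have "\<dots> = (\<Sum>k<n. U $$ (i,k) * (\<Sum>l<n. if l = k then D $$ (k,l) * U $$ (j,l) else 0))"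
      using dD D unfolding diagonal_mat_def by (intro sum.cong refl arg_cong2[where f="(*)"]) auto
    also have "\<dots> = (\<Sum>k<n. V i k * e k * V j k)" by (simp add: V_def e_def mult.assoc)
    finally show "A $$ (i,j) = (\<Sum>k<n. V i k * e k * V j k)" .
  qed
  have sim: "similar_mat A D" unfolding similar_mat_def similar_mat_wit_def
    by (rule exI[of _ U], rule exI[of _ "U\<^sup>T"]) (use A D U UU UUT AD in auto)
  have ut: "upper_triangular D" using dD D unfolding diagonal_mat_def upper_triangular_def by auto
  have "char_poly A = char_poly D" using char_poly_similar[OF sim] .
  also have "\<dots> = (\<Prod>a\<leftarrow>diag_mat D. [:- a, 1:])" by (rule char_poly_upper_triangular[OF D ut])
  also have "diag_mat D = map e [0..<n]" unfolding diag_mat_def e_def using D by simp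
  finally have "char_poly A = (\<Prod>k\<leftarrow>[0..<n]. [:- e k, 1:])" by (simp add: comp_def)
  thus ?thesis using rows cols ent by blast
qed

lemma prod_list_perm:
  fixes f :: "'a \<Rightarrow> 'b::comm_monoid_mult"
  shows "mset xs = mset ys \<Longrightarrow> prod_list (map f xs) = prod_list (map f ys)"
proof -
  assume h: "mset xs = mset ys"
  have "prod_list (map f xs) = prod_mset (mset (map f xs))" by (rule prod_mset_prod_list[symmetric])
  also have "mset (map f xs) = mset (map f ys)" using h by simp
  also have "prod_mset (mset (map f ys)) = prod_list (map f ys)" by (rule prod_mset_prod_list)
  finally show ?thesis .
qed

lemma linfac_mset:
  fixes xs ys :: "real list"
  assumes "(\<Prod>x\<leftarrow>xs. [:- x, 1:]) = (\<Prod>y\<leftarrow>ys. [:- y, 1:])"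
  shows "mset xs = mset ys"
  using assms
proof (induction xs arbitrary: ys)
  case Nil
  have d: "degree (\<Prod>y\<leftarrow>ys. [:- y, 1:]) = length ys" by (rule degree_linear_factors)
  have "(\<Prod>y\<leftarrow>ys. [:- y, 1:]) = 1" using Nil.prems[symmetric] by (simp only: list.map prod_list.Nil)
  hence "length ys = 0" using d by simp
  thus ?case by simp
next
  case (Cons x xs)
  have eq: "[:- x, 1:] * (\<Prod>y\<leftarrow>xs. [:- y, 1:]) = (\<Prod>y\<leftarrow>ys. [:- y, 1:])"
    using Cons.prems by (simp only: list.map prod_list.Cons)
  have "poly (\<Prod>y\<leftarrow>ys. [:- y, 1:]) x = 0" unfolding eq[symmetric] by (simp only: poly_mult) simp
  hence "0 \<in> set (map (\<lambda>p. poly p x) (map (\<lambda>y. [:- y, 1:]) ys))"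
    by (simp only: poly_prod_list prod_list_zero_iff)
  hence "x \<in> set ys" by auto
  hence ms: "mset ys = mset (x # remove1 x ys)" by simp
  have "(\<Prod>y\<leftarrow>ys. [:- y, 1:]) = (\<Prod>y\<leftarrow>x # remove1 x ys. [:- y, 1:])"
    using ms by (rule prod_list_perm)
  hence "[:- x, 1:] * (\<Prod>y\<leftarrow>xs. [:- y, 1:]) = [:- x, 1:] * (\<Prod>y\<leftarrow>remove1 x ys. [:- y, 1:])"
    unfolding eq by (simp only: list.map prod_list.Cons)
  moreover have nz: "[:- x, 1:] \<noteq> (0::real poly)" by simp
  ultimately have "(\<Prod>y\<leftarrow>xs. [:- y, 1:]) = (\<Prod>y\<leftarrow>remove1 x ys. [:- y, 1:])"
    using mult_left_cancel[OF nz] by blast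
  from Cons.IH[OF this] have ih: "mset xs = mset (remove1 x ys)" .
  have "mset (x # xs) = mset (x # remove1 x ys)" by (simp only: mset.simps ih)
  also have "\<dots> = mset ys" by (rule ms[symmetric])
  finally show ?case .
qed

lemma the_eigs:
  fixes e :: "nat \<Rightarrow> real"
  assumes "char_poly A = (\<Prod>k\<leftarrow>[0..<n]. [:- e k, 1:])"
  shows "(THE xs. sorted xs \<and> char_poly A = (\<Prod>x\<leftarrow>xs. [:- x, 1:])) = sort (map e [0..<n])"
proof (rule the_equality)
  have "(\<Prod>x\<leftarrow>sort (map e [0..<n]). [:- x, 1:]) = (\<Prod>x\<leftarrow>map e [0..<n]. [:- x, 1:])"
    by (rule prod_list_perm) simp
  thus "sorted (sort (map e [0..<n])) \<and> char_poly A = (\<Prod>x\<leftarrow>sort (map e [0..<n]). [:- x, 1:])"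
    using assms by (simp add: comp_def)
next
  fix xs assume xs: "sorted xs \<and> char_poly A = (\<Prod>x\<leftarrow>xs. [:- x, 1:])"
  have "(\<Prod>x\<leftarrow>xs. [:- x, 1:]) = (\<Prod>x\<leftarrow>map e [0..<n]. [:- x, 1:])"
    using xs assms by (simp add: comp_def)
  hence "mset xs = mset (map e [0..<n])" by (rule linfac_mset)
  thus "xs = sort (map e [0..<n])" using xs properties_for_sort[of xs "map e [0..<n]"] by simp
qed

lemma count_sort:
  "card {i. i < length (sort (map e [0..<n])) \<and> P (sort (map e [0..<n]) ! i)} = card {k. k < n \<and> P (e k)}"
proof -
  have "card {i. i < length (sort (map e [0..<n])) \<and> P (sort (map e [0..<n]) ! i)}
      = length (filter P (sort (map e [0..<n])))" by (simp add: length_filter_conv_card)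
  also have "\<dots> = length (filter P (map e [0..<n]))"
    by (metis mset_filter mset_sort size_mset)
  also have "\<dots> = card {k. k < n \<and> P (e k)}" unfolding length_filter_conv_card
    by (intro arg_cong[where f=card]) auto
  finally show ?thesis .
qed

lemma sorted_count_le:
  fixes l :: "real list"
  assumes s: "sorted l" and m: "1 \<le> m" and c: "m \<le> card {i. i < length l \<and> l ! i \<le> c}"
  shows "l ! (m - 1) \<le> c"
proof (rule ccontr)
  assume "\<not> ?thesis"
  hence gt: "l ! (m - 1) > c" by simp
  have "{i. i < length l \<and> l ! i \<le> c} \<subseteq> {..<m - 1}"
  proof
    fix i assume i: "i \<in> {i. i < length l \<and> l ! i \<le> c}"
    show "i \<in> {..<m - 1}"
    proof (rule ccontr)
      assume "i \<notin> {..<m - 1}"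
      hence "m - 1 \<le> i" by simp
      hence "l ! (m - 1) \<le> l ! i" using s i by (simp add: sorted_nth_mono)
      thus False using i gt by simp
    qed
  qed
  hence "card {i. i < length l \<and> l ! i \<le> c} \<le> m - 1"
    by (metis card_lessThan card_mono finite_lessThan)
  thus False using c m by simp
qed

lemma sorted_count_ge:
  fixes l :: "real list"
  assumes s: "sorted l" and m: "1 \<le> m" and c: "m \<le> card {i. i < length l \<and> c \<le> l ! i}"
  shows "c \<le> l ! (length l - m)"
proof (rule ccontr)
  assume "\<not> ?thesis"
  hence gt: "l ! (length l - m) < c" by simp
  have "{i. i < length l \<and> c \<le> l ! i} \<subseteq> {length l - m + 1..<length l}"
  proof
    fix i assume i: "i \<in> {i. i < length l \<and> c \<le> l ! i}"
    show "i \<in> {length l - m + 1..<length l}"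
    proof (rule ccontr)
      assume "i \<notin> {length l - m + 1..<length l}"
      hence "i \<le> length l - m" using i by auto
      hence "l ! i \<le> l ! (length l - m)" using s i m by (intro sorted_nth_mono) auto
      thus False using i gt by simp
    qed
  qed
  hence "card {i. i < length l \<and> c \<le> l ! i} \<le> card {length l - m + 1..<length l}"
    by (intro card_mono) auto
  thus False using c m by simp
qed

definition gdeg :: "'v set \<Rightarrow> ('v \<Rightarrow> 'v \<Rightarrow> bool) \<Rightarrow> 'v \<Rightarrow> nat" where
  "gdeg W A x = card {z \<in> W. A x z}"

definition Qf :: "'v set \<Rightarrow> ('v \<Rightarrow> 'v \<Rightarrow> bool) \<Rightarrow> ('v \<Rightarrow> real) \<Rightarrow> real" where
  "Qf W A f = (\<Sum>x\<in>W. \<Sum>y\<in>W. f x * (if x = y then real (gdeg W A x) else if A x y then -1 else 0) * f y)"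

definition E2 :: "'v set \<Rightarrow> ('v \<Rightarrow> 'v \<Rightarrow> bool) \<Rightarrow> ('v \<Rightarrow> real) \<Rightarrow> real" where
  "E2 W A f = (\<Sum>x\<in>W. \<Sum>y\<in>W. if A x y then (f x - f y)\<^sup>2 else 0)"

definition graph_ok :: "'v set \<Rightarrow> ('v \<Rightarrow> 'v \<Rightarrow> bool) \<Rightarrow> bool" where
  "graph_ok W A \<longleftrightarrow> finite W \<and> (\<forall>x y. A x y \<longrightarrow> A y x) \<and> (\<forall>x. \<not> A x x)"

lemma gdeg_sum: "finite W \<Longrightarrow> real (gdeg W A x) = (\<Sum>y\<in>W. if A x y then 1 else 0)"
proof -
  assume fin: "finite W"
  have "{z \<in> W. A x z} = W \<inter> Collect (A x)" by blast
  thus ?thesis unfolding gdeg_def using fin by (simp add: sum.If_cases)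
qed

lemma sum_adj_const:
  assumes "finite W"
  shows "(\<Sum>x\<in>W. \<Sum>y\<in>W. if A x y then g x else 0) = (\<Sum>x\<in>W. real (gdeg W A x) * (g x :: real))"
proof (intro sum.cong refl)
  fix x
  have "(\<Sum>y\<in>W. if A x y then g x else 0) = (\<Sum>y\<in>W. g x * (if A x y then 1 else 0))"
    by (intro sum.cong) auto
  also have "\<dots> = g x * real (gdeg W A x)" using gdeg_sum[OF assms] by (simp add: sum_distrib_left)
  finally show "(\<Sum>y\<in>W. if A x y then g x else 0) = real (gdeg W A x) * g x" by simp
qed

lemma Qf_alt:
  assumes "graph_ok W A"
  shows "Qf W A f = (\<Sum>x\<in>W. real (gdeg W A x) * (f x)\<^sup>2) - (\<Sum>x\<in>W. \<Sum>y\<in>W. if A x y then f x * f y else 0)"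
proof -
  have fin: "finite W" and irr: "\<And>x. \<not> A x x" using assms unfolding graph_ok_def by auto
  have "Qf W A f = (\<Sum>x\<in>W. \<Sum>y\<in>W. (if x = y then real (gdeg W A x) * (f x)\<^sup>2 else 0)
        - (if A x y then f x * f y else 0))"
    unfolding Qf_def by (intro sum.cong refl) (auto simp: irr power2_eq_square)
  also have "\<dots> = (\<Sum>x\<in>W. real (gdeg W A x) * (f x)\<^sup>2) - (\<Sum>x\<in>W. \<Sum>y\<in>W. if A x y then f x * f y else 0)"
    using fin by (simp add: sum_subtractf)
  finally show ?thesis .
qed

lemma E2_Qf:
  assumes "graph_ok W A"
  shows "E2 W A f = 2 * Qf W A f"
proof -
  have fin: "finite W" and sym: "\<And>x y. A x y \<Longrightarrow> A y x" using assms unfolding graph_ok_def by auto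
  have "E2 W A f = (\<Sum>x\<in>W. \<Sum>y\<in>W. (if A x y then (f x)\<^sup>2 else 0) + (if A x y then (f y)\<^sup>2 else 0)
       - 2 * (if A x y then f x * f y else 0))"
    unfolding E2_def by (intro sum.cong refl) (auto simp: power2_eq_square algebra_simps)
  also have "\<dots> = (\<Sum>x\<in>W. \<Sum>y\<in>W. if A x y then (f x)\<^sup>2 else 0) + (\<Sum>x\<in>W. \<Sum>y\<in>W. if A x y then (f y)\<^sup>2 else 0)
       - 2 * (\<Sum>x\<in>W. \<Sum>y\<in>W. if A x y then f x * f y else 0)"
    by (simp add: sum.distrib sum_subtractf sum_distrib_left)
  also have "(\<Sum>x\<in>W. \<Sum>y\<in>W. if A x y then (f y)\<^sup>2 else 0) = (\<Sum>y\<in>W. \<Sum>x\<in>W. if A x y then (f y)\<^sup>2 else 0)"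
    by (rule sum.swap)
  also have "\<dots> = (\<Sum>x\<in>W. \<Sum>y\<in>W. if A x y then (f x)\<^sup>2 else 0)"
    by (intro sum.cong refl) (auto dest: sym)
  also have "(\<Sum>x\<in>W. \<Sum>y\<in>W. if A x y then (f x)\<^sup>2 else 0) = (\<Sum>x\<in>W. real (gdeg W A x) * (f x)\<^sup>2)"
    using fin by (rule sum_adj_const)
  finally show ?thesis using Qf_alt[OF assms] by simp
qed

lemma Qf_nonneg:
  assumes "graph_ok W A"
  shows "0 \<le> Qf W A f"
proof -
  have "0 \<le> E2 W A f" unfolding E2_def by (intro sum_nonneg) auto
  thus ?thesis using E2_Qf[OF assms] by simp
qed

lemma Qf_upper:
  assumes g: "graph_ok W A" and D: "\<And>x. x \<in> W \<Longrightarrow> gdeg W A x \<le> D"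
  shows "Qf W A f \<le> 2 * real D * (\<Sum>x\<in>W. (f x)\<^sup>2)"
proof -
  have fin: "finite W" and sym: "\<And>x y. A x y \<Longrightarrow> A y x" using g unfolding graph_ok_def by auto
  have "E2 W A f \<le> (\<Sum>x\<in>W. \<Sum>y\<in>W. (if A x y then 2 * (f x)\<^sup>2 else 0) + (if A x y then 2 * (f y)\<^sup>2 else 0))"
    unfolding E2_def
  proof (intro sum_mono, goal_cases)
    case (1 x y)
    have "(f x - f y)\<^sup>2 \<le> 2 * (f x)\<^sup>2 + 2 * (f y)\<^sup>2"
      by (smt (verit) sum_squares_bound power2_diff zero_le_power2 power2_sum)
    thus "(if A x y then (f x - f y)\<^sup>2 else 0) \<le> (if A x y then 2 * (f x)\<^sup>2 else 0) + (if A x y then 2 * (f y)\<^sup>2 else 0)"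
      by auto
  qed
  also have "\<dots> = 2 * (\<Sum>x\<in>W. \<Sum>y\<in>W. if A x y then (f x)\<^sup>2 else 0) + 2 * (\<Sum>x\<in>W. \<Sum>y\<in>W. if A x y then (f y)\<^sup>2 else 0)"
    by (simp add: sum.distrib sum_distrib_left if_distrib[of "\<lambda>t. 2 * t"] cong: if_cong)
  also have "(\<Sum>x\<in>W. \<Sum>y\<in>W. if A x y then (f y)\<^sup>2 else 0) = (\<Sum>y\<in>W. \<Sum>x\<in>W. if A x y then (f y)\<^sup>2 else 0)"
    by (rule sum.swap)
  also have "\<dots> = (\<Sum>x\<in>W. \<Sum>y\<in>W. if A x y then (f x)\<^sup>2 else 0)"
    by (intro sum.cong refl) (auto dest: sym)
  also have "(\<Sum>x\<in>W. \<Sum>y\<in>W. if A x y then (f x)\<^sup>2 else 0) = (\<Sum>x\<in>W. real (gdeg W A x) * (f x)\<^sup>2)"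
    using fin by (rule sum_adj_const)
  also have "\<dots> \<le> (\<Sum>x\<in>W. real D * (f x)\<^sup>2)"
    using D by (intro sum_mono mult_right_mono) auto
  finally have "E2 W A f \<le> 4 * real D * (\<Sum>x\<in>W. (f x)\<^sup>2)" by (simp add: sum_distrib_left mult.assoc)
  thus ?thesis using E2_Qf[OF g] by simp
qed

lemma reindex_vs:
  fixes W :: "'v::linorder set"
  assumes "finite W"
  shows "(\<Sum>i<card W. h (sorted_list_of_set W ! i)) = (\<Sum>x\<in>W. h x)"
proof -
  have b: "bij_betw ((!) (sorted_list_of_set W)) {..<card W} W"
    by (rule bij_betw_nth) (use assms in auto)
  show ?thesis using sum.reindex_bij_betw[OF b, of h] by simp
qed

lemma lap_carrier: "laplacian_mat W A \<in> carrier_mat (card W) (card W)"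
  unfolding laplacian_mat_def Let_def by simp

lemma lap_index:
  fixes W :: "'v::linorder set"
  assumes fin: "finite W" and i: "i < card W" and l: "l < card W"
  shows "laplacian_mat W A $$ (i,l) =
    (let vs = sorted_list_of_set W in
     if vs ! i = vs ! l then real (gdeg W A (vs ! i)) else if A (vs ! i) (vs ! l) then -1 else 0)"
proof -
  let ?vs = "sorted_list_of_set W"
  have d: "distinct ?vs" by simp
  have len: "length ?vs = card W" by simp
  have "(?vs ! i = ?vs ! l) = (i = l)" using nth_eq_iff_index_eq[OF d] i l len by auto
  thus ?thesis unfolding laplacian_mat_def Let_def gdeg_def using i l by auto
qed

lemma lap_sym:
  fixes W :: "'v::linorder set"
  assumes g: "graph_ok W A"
  shows "(laplacian_mat W A)\<^sup>T = laplacian_mat W A"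
proof (rule eq_matI)
  have fin: "finite W" and sym: "\<And>x y. A x y \<Longrightarrow> A y x" using g unfolding graph_ok_def by auto
  fix i j assume "i < dim_row (laplacian_mat W A)" "j < dim_col (laplacian_mat W A)"
  hence i: "i < card W" and j: "j < card W" using lap_carrier[of W A] by auto
  show "(laplacian_mat W A)\<^sup>T $$ (i,j) = laplacian_mat W A $$ (i,j)"
    using i j lap_carrier[of W A] lap_index[OF fin i j, of A] lap_index[OF fin j i, of A]
    by (auto simp: Let_def dest: sym)
qed (use lap_carrier[of W A] in auto)

lemma quad_bridge:
  fixes W :: "'v::linorder set"
  assumes fin: "finite W"
  shows "(\<Sum>i<card W. \<Sum>l<card W. f (sorted_list_of_set W ! i) * laplacian_mat W A $$ (i,l)
            * f (sorted_list_of_set W ! l)) = Qf W A f"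
proof -
  let ?vs = "sorted_list_of_set W"
  have "(\<Sum>i<card W. \<Sum>l<card W. f (?vs ! i) * laplacian_mat W A $$ (i,l) * f (?vs ! l))
      = (\<Sum>i<card W. \<Sum>l<card W. f (?vs ! i) * (if ?vs ! i = ?vs ! l then real (gdeg W A (?vs ! i))
           else if A (?vs ! i) (?vs ! l) then -1 else 0) * f (?vs ! l))"
    by (intro sum.cong refl) (simp add: lap_index[OF fin] Let_def)
  also have "\<dots> = (\<Sum>x\<in>W. \<Sum>l<card W. f x * (if x = ?vs ! l then real (gdeg W A x)
           else if A x (?vs ! l) then -1 else 0) * f (?vs ! l))"
    by (rule reindex_vs[OF fin, of "\<lambda>x. \<Sum>l<card W. f x * (if x = ?vs ! l then real (gdeg W A x)
           else if A x (?vs ! l) then -1 else 0) * f (?vs ! l)"])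
  also have "\<dots> = Qf W A f" unfolding Qf_def
    by (intro sum.cong refl, rule reindex_vs[OF fin])
  finally show ?thesis .
qed

lemma lap_spec:
  fixes W :: "'v::linorder set"
  assumes g: "graph_ok W A"
  shows "\<exists>U e. (\<forall>i<card W. \<forall>j<card W. (\<Sum>k<card W. U i k * U j k) = (if i = j then 1 else 0)) \<and>
     (\<forall>i<card W. \<forall>j<card W. (\<Sum>k<card W. U k i * U k j) = (if i = j then 1 else 0)) \<and>
     (\<forall>i<card W. \<forall>j<card W. laplacian_mat W A $$ (i,j) = (\<Sum>k<card W. U i k * e k * U j k)) \<and>
     lap_eigs W A = sort (map e [0..<card W])"
proof -
  obtain U e where r: "\<forall>i<card W. \<forall>j<card W. (\<Sum>k<card W. U i k * U j k) = (if i = j then 1 else 0)"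
    and c: "\<forall>i<card W. \<forall>j<card W. (\<Sum>k<card W. U k i * U k j) = (if i = j then 1 else 0)"
    and ent: "\<forall>i<card W. \<forall>j<card W. laplacian_mat W A $$ (i,j) = (\<Sum>k<card W. U i k * e k * U j k)"
    and cp: "char_poly (laplacian_mat W A) = (\<Prod>k\<leftarrow>[0..<card W]. [:- e k, 1:])"
    using spectral_fun[OF lap_carrier lap_sym[OF g]] by blast
  have "lap_eigs W A = sort (map e [0..<card W])"
    unfolding lap_eigs_def by (rule the_eigs[OF cp])
  thus ?thesis using r c ent by blast
qed

lemma sq_at_most_one:
  fixes h :: "nat \<Rightarrow> real"
  assumes "\<And>j j'. j < m \<Longrightarrow> j' < m \<Longrightarrow> h j \<noteq> 0 \<Longrightarrow> h j' \<noteq> 0 \<Longrightarrow> j = j'"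
  shows "(\<Sum>j<m. h j)\<^sup>2 = (\<Sum>j<m. (h j)\<^sup>2)"
proof (cases "\<exists>j<m. h j \<noteq> 0")
  case False thus ?thesis by simp
next
  case True
  then obtain j0 where j0: "j0 < m" "h j0 \<noteq> 0" by blast
  have z: "\<And>j. j \<in> {..<m} - {j0} \<Longrightarrow> h j = 0" using assms j0 by blast
  have "(\<Sum>j<m. h j) = h j0 + (\<Sum>j\<in>{..<m} - {j0}. h j)" using j0 by (simp add: sum.remove)
  also have "(\<Sum>j\<in>{..<m} - {j0}. h j) = 0" using z by simp
  finally have a: "(\<Sum>j<m. h j) = h j0" by simp
  have "(\<Sum>j<m. (h j)\<^sup>2) = (h j0)\<^sup>2 + (\<Sum>j\<in>{..<m} - {j0}. (h j)\<^sup>2)" using j0 by (simp add: sum.remove)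
  also have "(\<Sum>j\<in>{..<m} - {j0}. (h j)\<^sup>2) = 0" using z by simp
  finally show ?thesis using a by simp
qed

lemma lap_eigs_props:
  fixes W :: "'v::linorder set"
  assumes g: "graph_ok W A" and D: "\<And>x. x \<in> W \<Longrightarrow> gdeg W A x \<le> D"
  shows "sorted (lap_eigs W A)" "length (lap_eigs W A) = card W"
    "\<And>i. i < card W \<Longrightarrow> 0 \<le> lap_eigs W A ! i \<and> lap_eigs W A ! i \<le> 2 * real D"
proof -
  have fin: "finite W" using g unfolding graph_ok_def by auto
  obtain U e where r: "\<forall>i<card W. \<forall>j<card W. (\<Sum>k<card W. U i k * U j k) = (if i = j then 1 else 0)"
    and c: "\<forall>i<card W. \<forall>j<card W. (\<Sum>k<card W. U k i * U k j) = (if i = j then 1 else 0)"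
    and ent: "\<forall>i<card W. \<forall>j<card W. laplacian_mat W A $$ (i,j) = (\<Sum>k<card W. U i k * e k * U j k)"
    and le: "lap_eigs W A = sort (map e [0..<card W])"
    using lap_spec[OF g] by blast
  show "sorted (lap_eigs W A)" "length (lap_eigs W A) = card W" unfolding le by auto
  let ?vs = "sorted_list_of_set W"
  let ?N = "card W"
  define idx where "idx = the_inv_into {..<?N} ((!) ?vs)"
  have inj: "inj_on ((!) ?vs) {..<?N}"
    using bij_betw_nth[of ?vs "{..<?N}" W] fin unfolding bij_betw_def by auto
  have idx: "\<And>i. i < ?N \<Longrightarrow> idx (?vs ! i) = i"
    unfolding idx_def using the_inv_into_f_f[OF inj] by auto
  have ek: "0 \<le> e k \<and> e k \<le> 2 * real D" if k: "k < ?N" for k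
  proof -
    define f where "f = (\<lambda>x. U (idx x) k)"
    have fi: "\<And>i. i < ?N \<Longrightarrow> f (?vs ! i) = U i k" unfolding f_def using idx by simp
    have "(\<Sum>i<?N. \<Sum>l<?N. f (?vs ! i) * laplacian_mat W A $$ (i,l) * f (?vs ! l))
        = (\<Sum>i<?N. \<Sum>l<?N. U i k * (\<Sum>k'<?N. U i k' * e k' * U l k') * U l k)"
      by (intro sum.cong refl) (simp add: fi ent)
    also have "\<dots> = (\<Sum>i<?N. \<Sum>l<?N. \<Sum>k'<?N. (U i k * U i k' * e k') * (U l k' * U l k))"
      by (simp add: sum_distrib_left sum_distrib_right mult_ac)
    also have "\<dots> = (\<Sum>k'<?N. (\<Sum>i<?N. U i k * U i k' * e k') * (\<Sum>l<?N. U l k' * U l k))"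
      by (rule triple_swap[symmetric])
    also have "\<dots> = (\<Sum>k'<?N. (if k = k' then e k' else 0) * (if k' = k then 1 else 0))"
    proof (intro sum.cong refl arg_cong2[where f="(*)"])
      fix k' assume "k' \<in> {..<?N}"
      thus "(\<Sum>i<?N. U i k * U i k' * e k') = (if k = k' then e k' else 0)"
        using c k by (simp add: sum_distrib_right[symmetric])
      show "(\<Sum>l<?N. U l k' * U l k) = (if k' = k then 1 else 0)" using c k \<open>k' \<in> _\<close> by simp
    qed
    also have "\<dots> = (\<Sum>k'<?N. if k' = k then e k else 0)" by (intro sum.cong refl) auto
    also have "\<dots> = e k" using k by simp
    finally have Q: "Qf W A f = e k" using quad_bridge[OF fin, of f A] by simp
    have "(\<Sum>x\<in>W. (f x)\<^sup>2) = (\<Sum>i<?N. (f (?vs ! i))\<^sup>2)" by (rule reindex_vs[OF fin, symmetric])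
    also have "\<dots> = (\<Sum>i<?N. U i k * U i k)" by (intro sum.cong refl) (simp add: fi power2_eq_square)
    also have "\<dots> = 1" using c k by simp
    finally have n1: "(\<Sum>x\<in>W. (f x)\<^sup>2) = 1" .
    show ?thesis using Qf_nonneg[OF g, of f] Qf_upper[OF g D, of f] Q n1 by simp
  qed
  fix i assume i: "i < card W"
  have "lap_eigs W A ! i \<in> set (lap_eigs W A)" using i \<open>length (lap_eigs W A) = card W\<close> by simp
  hence "lap_eigs W A ! i \<in> e ` {..<?N}" unfolding le by auto
  thus "0 \<le> lap_eigs W A ! i \<and> lap_eigs W A ! i \<le> 2 * real D" using ek by auto
qed

locale testfns =
  fixes W :: "'v::linorder set" and A :: "'v \<Rightarrow> 'v \<Rightarrow> bool" and m :: nat and g :: "nat \<Rightarrow> 'v \<Rightarrow> real"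
  assumes gr: "graph_ok W A"
    and m: "1 \<le> m"
    and sep: "\<And>j j' x y. j < m \<Longrightarrow> j' < m \<Longrightarrow> j \<noteq> j' \<Longrightarrow> g j x \<noteq> 0 \<Longrightarrow> g j' y \<noteq> 0 \<Longrightarrow> x \<noteq> y \<and> \<not> A x y"
    and supp: "\<And>j x. j < m \<Longrightarrow> g j x \<noteq> 0 \<Longrightarrow> x \<in> W"
    and nz: "\<And>j. j < m \<Longrightarrow> \<exists>x. g j x \<noteq> 0"
begin

lemma fin: "finite W" using gr unfolding graph_ok_def by auto
lemma symA: "A x y \<Longrightarrow> A y x" using gr unfolding graph_ok_def by auto

lemma comb_norm: "(\<Sum>x\<in>W. (\<Sum>j<m. a j * g j x)\<^sup>2) = (\<Sum>j<m. (a j)\<^sup>2 * (\<Sum>x\<in>W. (g j x)\<^sup>2))"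
proof -
  have "(\<Sum>x\<in>W. (\<Sum>j<m. a j * g j x)\<^sup>2) = (\<Sum>x\<in>W. \<Sum>j<m. (a j)\<^sup>2 * (g j x)\<^sup>2)"
  proof (intro sum.cong refl)
    fix x
    have "(\<Sum>j<m. a j * g j x)\<^sup>2 = (\<Sum>j<m. (a j * g j x)\<^sup>2)"
    proof (rule sq_at_most_one)
      fix j j' assume j: "j < m" and j': "j' < m" and h1: "a j * g j x \<noteq> 0" and h2: "a j' * g j' x \<noteq> 0"
      show "j = j'"
      proof (rule ccontr)
        assume ne: "j \<noteq> j'"
        have "g j x \<noteq> 0" "g j' x \<noteq> 0" using h1 h2 by auto
        thus False using sep[OF j j' ne, of x x] by blast
      qed
    qed
    thus "(\<Sum>j<m. a j * g j x)\<^sup>2 = (\<Sum>j<m. (a j)\<^sup>2 * (g j x)\<^sup>2)" by (simp add: power_mult_distrib)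
  qed
  also have "\<dots> = (\<Sum>j<m. \<Sum>x\<in>W. (a j)\<^sup>2 * (g j x)\<^sup>2)" by (rule sum.swap)
  also have "\<dots> = (\<Sum>j<m. (a j)\<^sup>2 * (\<Sum>x\<in>W. (g j x)\<^sup>2))" by (simp add: sum_distrib_left)
  finally show ?thesis .
qed

lemma comb_Qf: "Qf W A (\<lambda>x. \<Sum>j<m. a j * g j x) = (\<Sum>j<m. (a j)\<^sup>2 * Qf W A (g j))"
proof -
  let ?G = "\<lambda>x. \<Sum>j<m. a j * g j x"
  have "E2 W A ?G = (\<Sum>x\<in>W. \<Sum>y\<in>W. \<Sum>j<m. (a j)\<^sup>2 * (if A x y then (g j x - g j y)\<^sup>2 else 0))"
    unfolding E2_def
  proof (intro sum.cong refl)
    fix x y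
    show "(if A x y then (?G x - ?G y)\<^sup>2 else 0) = (\<Sum>j<m. (a j)\<^sup>2 * (if A x y then (g j x - g j y)\<^sup>2 else 0))"
    proof (cases "A x y")
      case True
      have "?G x - ?G y = (\<Sum>j<m. a j * (g j x - g j y))" by (simp add: sum_subtractf algebra_simps)
      also have "(\<dots>)\<^sup>2 = (\<Sum>j<m. (a j * (g j x - g j y))\<^sup>2)"
      proof (rule sq_at_most_one)
        fix j j' assume j: "j < m" and j': "j' < m" and h1: "a j * (g j x - g j y) \<noteq> 0"
          and h2: "a j' * (g j' x - g j' y) \<noteq> 0"
        show "j = j'"
        proof (rule ccontr)
          assume ne: "j \<noteq> j'"
          have "g j x \<noteq> 0 \<or> g j y \<noteq> 0" using h1 by auto
          moreover have "g j' x \<noteq> 0 \<or> g j' y \<noteq> 0" using h2 by auto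
          ultimately show False using sep[OF j j' ne] True symA by blast
        qed
      qed
      finally show ?thesis using True by (simp add: power_mult_distrib)
    qed simp
  qed
  also have "\<dots> = (\<Sum>x\<in>W. \<Sum>j<m. \<Sum>y\<in>W. (a j)\<^sup>2 * (if A x y then (g j x - g j y)\<^sup>2 else 0))"
    by (intro sum.cong refl, rule sum.swap)
  also have "\<dots> = (\<Sum>j<m. \<Sum>x\<in>W. \<Sum>y\<in>W. (a j)\<^sup>2 * (if A x y then (g j x - g j y)\<^sup>2 else 0))"
    by (rule sum.swap)
  also have "\<dots> = (\<Sum>j<m. (a j)\<^sup>2 * E2 W A (g j))" unfolding E2_def by (simp add: sum_distrib_left)
  finally have "2 * Qf W A ?G = 2 * (\<Sum>j<m. (a j)\<^sup>2 * Qf W A (g j))"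
    using E2_Qf[OF gr] by (simp add: sum_distrib_left mult_ac)
  thus ?thesis by simp
qed

lemma comb_indep:
  assumes "\<forall>x\<in>W. (\<Sum>j<m. a j * g j x) = 0"
  shows "\<forall>j<m. a j = 0"
proof (rule ccontr)
  assume "\<not> ?thesis"
  then obtain j where j: "j < m" "a j \<noteq> 0" by blast
  obtain x where x: "g j x \<noteq> 0" using nz[OF j(1)] by blast
  have xW: "x \<in> W" using supp[OF j(1) x] .
  have z: "a j' * g j' x = 0" if h: "j' \<in> {..<m} - {j}" for j'
  proof (cases "g j' x = 0")
    case False
    have "j' < m" "j \<noteq> j'" using h by auto
    thus ?thesis using sep[OF j(1) \<open>j' < m\<close> \<open>j \<noteq> j'\<close> x False] by simp
  qed simp
  have "(\<Sum>j<m. a j * g j x) = a j * g j x + (\<Sum>j'\<in>{..<m} - {j}. a j' * g j' x)"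
    using j by (simp add: sum.remove)
  also have "(\<Sum>j'\<in>{..<m} - {j}. a j' * g j' x) = 0" using z by (intro sum.neutral) blast
  finally have "(\<Sum>j<m. a j * g j x) \<noteq> 0" using j x by simp
  thus False using assms xW by blast
qed

lemma lower_end:
  assumes ray: "\<And>j. j < m \<Longrightarrow> Qf W A (g j) \<le> c * (\<Sum>x\<in>W. (g j x)\<^sup>2)"
  shows "lap_eig W A m \<le> c"
proof -
  obtain U e where r: "\<forall>i<card W. \<forall>j<card W. (\<Sum>k<card W. U i k * U j k) = (if i = j then 1 else 0)"
    and ent: "\<forall>i<card W. \<forall>j<card W. laplacian_mat W A $$ (i,j) = (\<Sum>k<card W. U i k * e k * U j k)"
    and le: "lap_eigs W A = sort (map e [0..<card W])"
    using lap_spec[OF gr] by blast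
  let ?vs = "sorted_list_of_set W"
  have "m \<le> card {k. k < card W \<and> e k \<le> c}"
  proof (rule minmax[where U = U and M = "\<lambda>i l. laplacian_mat W A $$ (i,l)" and y = "\<lambda>j i. g j (?vs ! i)"])
    show "\<And>i j. i < card W \<Longrightarrow> j < card W \<Longrightarrow> (\<Sum>k<card W. U i k * U j k) = (if i = j then 1 else 0)"
      using r by blast
    show "\<And>i j. i < card W \<Longrightarrow> j < card W \<Longrightarrow> laplacian_mat W A $$ (i,j) = (\<Sum>k<card W. U i k * e k * U j k)"
      using ent by blast
  next
    fix a assume h: "\<forall>i<card W. (\<Sum>j<m. a j * g j (?vs ! i)) = 0"
    have "\<forall>x\<in>W. (\<Sum>j<m. a j * g j x) = 0"
    proof
      fix x assume "x \<in> W"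
      hence "x \<in> set ?vs" using fin by simp
      then obtain i where "i < length ?vs" "?vs ! i = x" by (auto simp: in_set_conv_nth)
      hence "i < card W" "x = ?vs ! i" by auto
      thus "(\<Sum>j<m. a j * g j x) = 0" using h by simp
    qed
    thus "\<forall>j<m. a j = 0" by (rule comb_indep)
  next
    fix a
    let ?G = "\<lambda>x. \<Sum>j<m. a j * g j x"
    have "(\<Sum>i<card W. \<Sum>l<card W. (\<Sum>j<m. a j * g j (?vs ! i)) * laplacian_mat W A $$ (i,l) * (\<Sum>j<m. a j * g j (?vs ! l)))
       = Qf W A ?G" using quad_bridge[OF fin, of ?G A] by simp
    also have "\<dots> = (\<Sum>j<m. (a j)\<^sup>2 * Qf W A (g j))" by (rule comb_Qf)
    also have "\<dots> \<le> (\<Sum>j<m. (a j)\<^sup>2 * (c * (\<Sum>x\<in>W. (g j x)\<^sup>2)))"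
      by (intro sum_mono mult_left_mono ray) auto
    also have "\<dots> = c * (\<Sum>x\<in>W. (?G x)\<^sup>2)" unfolding comb_norm by (simp add: sum_distrib_left mult_ac)
    also have "(\<Sum>x\<in>W. (?G x)\<^sup>2) = (\<Sum>i<card W. (?G (?vs ! i))\<^sup>2)" by (rule reindex_vs[OF fin, symmetric])
    finally show "(\<Sum>i<card W. \<Sum>l<card W. (\<Sum>j<m. a j * g j (?vs ! i)) * laplacian_mat W A $$ (i,l) * (\<Sum>j<m. a j * g j (?vs ! l)))
       \<le> c * (\<Sum>i<card W. (\<Sum>j<m. a j * g j (?vs ! i))\<^sup>2)" .
  qed
  hence cnt: "m \<le> card {i. i < length (lap_eigs W A) \<and> lap_eigs W A ! i \<le> c}"
    unfolding le using count_sort[of e "card W" "\<lambda>x. x \<le> c"] by simp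
  have srt: "sorted (lap_eigs W A)" unfolding le by simp
  have "lap_eigs W A ! (m - 1) \<le> c" by (rule sorted_count_le[OF srt m cnt])
  thus ?thesis unfolding lap_eig_def .
qed

lemma upper_end:
  assumes ray: "\<And>j. j < m \<Longrightarrow> c * (\<Sum>x\<in>W. (g j x)\<^sup>2) \<le> Qf W A (g j)"
  shows "c \<le> lap_eig W A (card W - m + 1)"
proof -
  obtain U e where r: "\<forall>i<card W. \<forall>j<card W. (\<Sum>k<card W. U i k * U j k) = (if i = j then 1 else 0)"
    and ent: "\<forall>i<card W. \<forall>j<card W. laplacian_mat W A $$ (i,j) = (\<Sum>k<card W. U i k * e k * U j k)"
    and le: "lap_eigs W A = sort (map e [0..<card W])"
    using lap_spec[OF gr] by blast
  let ?vs = "sorted_list_of_set W"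
  have "m \<le> card {k. k < card W \<and> (\<lambda>k. - e k) k \<le> - c}"
  proof (rule minmax[where U = U and M = "\<lambda>i l. - laplacian_mat W A $$ (i,l)" and y = "\<lambda>j i. g j (?vs ! i)"])
    show "\<And>i j. i < card W \<Longrightarrow> j < card W \<Longrightarrow> (\<Sum>k<card W. U i k * U j k) = (if i = j then 1 else 0)"
      using r by blast
    show "\<And>i j. i < card W \<Longrightarrow> j < card W \<Longrightarrow> - laplacian_mat W A $$ (i,j) = (\<Sum>k<card W. U i k * - e k * U j k)"
      using ent by (simp add: sum_negf)
  next
    fix a assume h: "\<forall>i<card W. (\<Sum>j<m. a j * g j (?vs ! i)) = 0"
    have "\<forall>x\<in>W. (\<Sum>j<m. a j * g j x) = 0"
    proof
      fix x assume "x \<in> W"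
      hence "x \<in> set ?vs" using fin by simp
      then obtain i where "i < length ?vs" "?vs ! i = x" by (auto simp: in_set_conv_nth)
      hence "i < card W" "x = ?vs ! i" by auto
      thus "(\<Sum>j<m. a j * g j x) = 0" using h by simp
    qed
    thus "\<forall>j<m. a j = 0" by (rule comb_indep)
  next
    fix a
    let ?G = "\<lambda>x. \<Sum>j<m. a j * g j x"
    have "(\<Sum>i<card W. \<Sum>l<card W. (\<Sum>j<m. a j * g j (?vs ! i)) * - laplacian_mat W A $$ (i,l) * (\<Sum>j<m. a j * g j (?vs ! l)))
       = - Qf W A ?G" using quad_bridge[OF fin, of ?G A] by (simp add: sum_negf)
    also have "Qf W A ?G = (\<Sum>j<m. (a j)\<^sup>2 * Qf W A (g j))" by (rule comb_Qf)
    also have "(\<Sum>j<m. (a j)\<^sup>2 * Qf W A (g j)) \<ge> (\<Sum>j<m. (a j)\<^sup>2 * (c * (\<Sum>x\<in>W. (g j x)\<^sup>2)))"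
      by (intro sum_mono mult_left_mono ray) auto
    hence "- (\<Sum>j<m. (a j)\<^sup>2 * Qf W A (g j)) \<le> - (\<Sum>j<m. (a j)\<^sup>2 * (c * (\<Sum>x\<in>W. (g j x)\<^sup>2)))" by simp
    also have "(\<Sum>j<m. (a j)\<^sup>2 * (c * (\<Sum>x\<in>W. (g j x)\<^sup>2))) = c * (\<Sum>x\<in>W. (?G x)\<^sup>2)"
      unfolding comb_norm by (simp add: sum_distrib_left mult_ac)
    also have "(\<Sum>x\<in>W. (?G x)\<^sup>2) = (\<Sum>i<card W. (?G (?vs ! i))\<^sup>2)" by (rule reindex_vs[OF fin, symmetric])
    finally show "(\<Sum>i<card W. \<Sum>l<card W. (\<Sum>j<m. a j * g j (?vs ! i)) * - laplacian_mat W A $$ (i,l) * (\<Sum>j<m. a j * g j (?vs ! l)))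
       \<le> - c * (\<Sum>i<card W. (\<Sum>j<m. a j * g j (?vs ! i))\<^sup>2)" by simp
  qed
  hence "m \<le> card {k. k < card W \<and> c \<le> e k}" by simp
  hence cnt: "m \<le> card {i. i < length (lap_eigs W A) \<and> c \<le> lap_eigs W A ! i}"
    unfolding le using count_sort[of e "card W" "\<lambda>x. c \<le> x"] by simp
  have srt: "sorted (lap_eigs W A)" unfolding le by simp
  have "c \<le> lap_eigs W A ! (length (lap_eigs W A) - m)" by (rule sorted_count_ge[OF srt m cnt])
  moreover have "length (lap_eigs W A) = card W" unfolding le by simp
  ultimately show ?thesis unfolding lap_eig_def by simp
qed

end

locale gcdata =
  fixes d k :: nat and V :: "'a::linorder set" and E :: "'a \<Rightarrow> 'a \<Rightarrow> bool" and rot :: "'a \<Rightarrow> nat \<Rightarrow> 'a"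
    and cells :: "'c::linorder set" and cadj :: "'c \<Rightarrow> 'c \<Rightarrow> bool" and bnd :: "nat \<Rightarrow> nat \<Rightarrow> 'c"
    and nb :: "'c \<Rightarrow> nat \<Rightarrow> 'c"
  assumes orr: "oriented_regular d V E rot"
    and fincells: "finite cells"
    and cadj_sym: "\<And>c c'. cadj c c' \<Longrightarrow> cadj c' c"
    and cadj_irr: "\<And>c. \<not> cadj c c"
    and nbch: "\<And>c c'. c \<in> cells \<Longrightarrow> c' \<in> cells \<Longrightarrow> cadj c c' \<Longrightarrow> \<exists>t<d. c' = nb c t"
    and nb_adj: "\<And>c t. c \<in> cells \<Longrightarrow> t < d \<Longrightarrow> cadj c (nb c t)"
    and nb_inj: "\<And>c. c \<in> cells \<Longrightarrow> inj_on (nb c) {..<d}"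
    and bside: "\<And>c s i. c \<in> cells \<Longrightarrow> s < d \<Longrightarrow> i < k \<Longrightarrow> c = bnd s i \<Longrightarrow> nb c s \<notin> cells"
    and binj: "\<And>s i i'. s < d \<Longrightarrow> i < k \<Longrightarrow> i' < k \<Longrightarrow> bnd s i = bnd s i' \<Longrightarrow> i = i'"
begin

abbreviation "W \<equiv> V \<times> cells"
abbreviation "Adj \<equiv> gc_adj d k V rot cells cadj bnd"

lemma finV: "finite V" using orr unfolding oriented_regular_def simple_graph_def by auto
lemma Esym: "E p q \<Longrightarrow> E q p" using orr unfolding oriented_regular_def simple_graph_def by auto
lemma Eirr: "\<not> E p p" using orr unfolding oriented_regular_def simple_graph_def by auto
lemma EV: "E p q \<Longrightarrow> p \<in> V \<and> q \<in> V" using orr unfolding oriented_regular_def simple_graph_def by auto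
lemma rotbij: "p \<in> V \<Longrightarrow> bij_betw (rot p) {..<d} {q. E p q}"
  using orr unfolding oriented_regular_def by auto
lemma rotE: "p \<in> V \<Longrightarrow> s < d \<Longrightarrow> E p (rot p s)"
  using rotbij[of p] unfolding bij_betw_def by auto
lemma rotinj: "p \<in> V \<Longrightarrow> s < d \<Longrightarrow> s' < d \<Longrightarrow> rot p s = rot p s' \<Longrightarrow> s = s'"
  using rotbij[of p] unfolding bij_betw_def inj_on_def by auto

lemma Adj_W: "Adj x y \<Longrightarrow> x \<in> W \<and> y \<in> W"
  unfolding gc_adj_def by (cases x, cases y) auto

lemma graph_ok_gc: "graph_ok W Adj"
  unfolding graph_ok_def
proof (intro conjI allI impI)
  show "finite W" using finV fincells by simp
next
  fix x y assume a: "Adj x y"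
  show "Adj y x"
  proof -
    have base: "fst x \<in> V \<and> fst y \<in> V \<and> snd x \<in> cells \<and> snd y \<in> cells" using a unfolding gc_adj_def by auto
    from a consider "fst x = fst y \<and> cadj (snd x) (snd y)"
      | s s' i where "s < d" "s' < d" "i < k" "rot (fst x) s = fst y" "rot (fst y) s' = fst x"
          "snd x = bnd s i" "snd y = bnd s' (k - 1 - i)"
      unfolding gc_adj_def by blast
    thus ?thesis
    proof cases
      case 1 thus ?thesis using base cadj_sym unfolding gc_adj_def by auto
    next
      case 2
      have "k - 1 - (k - 1 - i) = i" using 2 by simp
      hence e1: "snd x = bnd s (k - 1 - (k - 1 - i))" using 2 by simp
      have lt: "k - 1 - i < k" using 2 by simp
      have "\<exists>s<d. \<exists>s'<d. \<exists>i'<k. rot (fst y) s = fst x \<and> rot (fst x) s' = fst y \<and>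
          snd y = bnd s i' \<and> snd x = bnd s' (k - 1 - i')"
        using 2 e1 lt by blast
      thus ?thesis using base unfolding gc_adj_def by blast
    qed
  qed
next
  fix x show "\<not> Adj x x"
  proof
    assume a: "Adj x x"
    hence xV: "fst x \<in> V" unfolding gc_adj_def by auto
    from a consider "cadj (snd x) (snd x)" | s where "s < d" "rot (fst x) s = fst x"
      unfolding gc_adj_def by blast
    thus False
    proof cases
      case 1 thus False using cadj_irr by blast
    next
      case 2 thus False using rotE[OF xV 2(1)] Eirr by simp
    qed
  qed
qed

lemma deg_le:
  assumes x: "x \<in> W"
  shows "gdeg W Adj x \<le> d"
proof -
  obtain p c where xpc: "x = (p, c)" and p: "p \<in> V" and c: "c \<in> cells" using x by auto
  define NI where "NI = {c' \<in> cells. cadj c c'}"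
  define Sd where "Sd = {s. s < d \<and> (\<exists>i<k. c = bnd s i)}"
  define glue where "glue = (\<lambda>s. (rot p s, bnd (THE s'. s' < d \<and> rot (rot p s) s' = p)
      (k - 1 - (THE i. i < k \<and> c = bnd s i))))"
  have sub: "{z \<in> W. Adj x z} \<subseteq> Pair p ` NI \<union> glue ` Sd"
  proof
    fix z assume z: "z \<in> {z \<in> W. Adj x z}"
    obtain q c' where zqc: "z = (q, c')" by (cases z)
    have base: "q \<in> V" "c' \<in> cells" using z zqc by auto
    from z[unfolded xpc zqc] consider "p = q \<and> cadj c c'"
      | s s' i where "s < d" "s' < d" "i < k" "rot p s = q" "rot q s' = p"
          "c = bnd s i" "c' = bnd s' (k - 1 - i)"
      unfolding gc_adj_def by auto
    thus "z \<in> Pair p ` NI \<union> glue ` Sd"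
    proof cases
      case 1 thus ?thesis using base zqc unfolding NI_def by auto
    next
      case 2
      have s'u: "(THE s'. s' < d \<and> rot (rot p s) s' = p) = s'"
        using 2 rotinj[OF base(1)] by (intro the_equality) auto
      have iu: "(THE i. i < k \<and> c = bnd s i) = i"
        using 2 binj[OF 2(1)] by (intro the_equality) auto
      have "glue s = z" unfolding glue_def s'u iu zqc using 2 by simp
      moreover have "s \<in> Sd" unfolding Sd_def using 2 by auto
      ultimately show ?thesis by blast
    qed
  qed
  have IntS: "NI \<subseteq> nb c ` {t. t < d \<and> nb c t \<in> cells}"
    unfolding NI_def using nbch[OF c] by blast
  have SdS: "Sd \<subseteq> {t. t < d \<and> nb c t \<notin> cells}"
    unfolding Sd_def using bside[OF c] by blast
  have fin1: "finite {t. t < d \<and> nb c t \<in> cells}" by simp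
  have fin2: "finite {t. t < d \<and> nb c t \<notin> cells}" by simp
  have finI: "finite NI" using finite_subset[OF IntS] fin1 by blast
  have finS: "finite Sd" using finite_subset[OF SdS] fin2 by blast
  have "gdeg W Adj x \<le> card (Pair p ` NI \<union> glue ` Sd)"
    unfolding gdeg_def using finI finS by (intro card_mono[OF _ sub]) auto
  also have "\<dots> \<le> card (Pair p ` NI) + card (glue ` Sd)" by (rule card_Un_le)
  also have "\<dots> \<le> card NI + card Sd" by (intro add_mono card_image_le finI finS)
  also have "\<dots> \<le> card (nb c ` {t. t < d \<and> nb c t \<in> cells}) + card {t. t < d \<and> nb c t \<notin> cells}"
    using fin1 fin2 by (intro add_mono card_mono IntS SdS) auto
  also have "\<dots> \<le> card {t. t < d \<and> nb c t \<in> cells} + card {t. t < d \<and> nb c t \<notin> cells}"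
    by (intro add_mono card_image_le fin1) auto
  also have "\<dots> = card ({t. t < d \<and> nb c t \<in> cells} \<union> {t. t < d \<and> nb c t \<notin> cells})"
    by (rule card_Un_disjoint[symmetric]) auto
  also have "{t. t < d \<and> nb c t \<in> cells} \<union> {t. t < d \<and> nb c t \<notin> cells} = {..<d}" by auto
  finally show ?thesis by simp
qed

definition deep :: "'c \<Rightarrow> bool" where
  "deep c \<longleftrightarrow> c \<in> cells \<and> (\<forall>s<d. \<forall>i<k. c \<noteq> bnd s i) \<and> (\<forall>t<d. nb c t \<in> cells)"

lemma deep_adj:
  assumes p: "p \<in> V" and c: "deep c"
  shows "Adj (p, c) y \<longleftrightarrow> (\<exists>t<d. y = (p, nb c t))"
proof
  assume a: "Adj (p, c) y"
  obtain q c' where y: "y = (q, c')" by (cases y)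
  have base: "q \<in> V" "c' \<in> cells" using Adj_W[OF a] y by auto
  from a[unfolded y] c have "p = q \<and> cadj c c'" unfolding gc_adj_def deep_def by auto
  thus "\<exists>t<d. y = (p, nb c t)" using nbch[of c c'] c base y unfolding deep_def by auto
next
  assume "\<exists>t<d. y = (p, nb c t)"
  then obtain t where t: "t < d" "y = (p, nb c t)" by blast
  show "Adj (p, c) y" unfolding t(2) gc_adj_def using p c t nb_adj unfolding deep_def by auto
qed

lemma deep_nbrs:
  assumes p: "p \<in> V" and c: "deep c"
  shows "{z \<in> W. Adj (p, c) z} = (\<lambda>t. (p, nb c t)) ` {..<d}"
  using deep_adj[OF p c] Adj_W[of "(p,c)"] p c unfolding deep_def by auto

lemma deep_deg:
  assumes p: "p \<in> V" and c: "deep c"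
  shows "gdeg W Adj (p, c) = d"
proof -
  have "inj_on (\<lambda>t. (p, nb c t)) {..<d}" using nb_inj[of c] c unfolding deep_def inj_on_def by auto
  thus ?thesis unfolding gdeg_def deep_nbrs[OF p c] by (simp add: card_image)
qed

lemma sum_block:
  assumes p0: "p0 \<in> V" and B: "B \<subseteq> cells" and F: "\<And>x. x \<notin> Pair p0 ` B \<Longrightarrow> F x = 0"
  shows "(\<Sum>x\<in>W. F x) = (\<Sum>c\<in>B. F (p0, c))"
proof -
  have finW: "finite W" using finV fincells by simp
  have "(\<Sum>x\<in>Pair p0 ` B. F x) = (\<Sum>x\<in>W. F x)"
    by (rule sum.mono_neutral_left) (use finW p0 B F in auto)
  also have "(\<Sum>x\<in>Pair p0 ` B. F x) = (\<Sum>c\<in>B. F (p0, c))"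
    by (subst sum.reindex) (auto simp: inj_on_def)
  finally show ?thesis by simp
qed

lemma block_fn:
  fixes h :: "'c \<Rightarrow> real"
  assumes p0: "p0 \<in> V" and B: "B \<subseteq> {c. deep c}"
    and h2: "\<And>c. c \<in> B \<Longrightarrow> (h c)\<^sup>2 = 1"
    and hk: "\<And>c t. c \<in> B \<Longrightarrow> t < d \<Longrightarrow> nb c t \<in> B \<Longrightarrow> h c * h (nb c t) = \<kappa>"
  shows "Qf W Adj (\<lambda>x. if fst x = p0 \<and> snd x \<in> B then h (snd x) else 0)
      = real d * card B - \<kappa> * (\<Sum>c\<in>B. real (card {t. t < d \<and> nb c t \<in> B}))"
    and "(\<Sum>x\<in>W. (if fst x = p0 \<and> snd x \<in> B then h (snd x) else 0)\<^sup>2) = card B"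
proof -
  let ?g = "\<lambda>x. if fst x = p0 \<and> snd x \<in> B then h (snd x) else 0"
  have Bc: "B \<subseteq> cells" using B unfolding deep_def by auto
  have off: "\<And>x. x \<notin> Pair p0 ` B \<Longrightarrow> ?g x = 0" by (auto simp: image_iff)
  have t1: "(\<Sum>x\<in>W. real (gdeg W Adj x) * (?g x)\<^sup>2) = real d * card B"
  proof -
    have "(\<Sum>x\<in>W. real (gdeg W Adj x) * (?g x)\<^sup>2) = (\<Sum>c\<in>B. real (gdeg W Adj (p0, c)) * (?g (p0, c))\<^sup>2)"
      by (rule sum_block[OF p0 Bc]) (simp add: off)
    also have "\<dots> = (\<Sum>c\<in>B. real d)"
      by (intro sum.cong refl) (use deep_deg[OF p0] B h2 in auto)
    finally show ?thesis by simp
  qed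
  have t2: "(\<Sum>x\<in>W. \<Sum>y\<in>W. if Adj x y then ?g x * ?g y else 0)
      = \<kappa> * (\<Sum>c\<in>B. real (card {t. t < d \<and> nb c t \<in> B}))"
  proof -
    have "(\<Sum>x\<in>W. \<Sum>y\<in>W. if Adj x y then ?g x * ?g y else 0)
        = (\<Sum>c\<in>B. \<Sum>y\<in>W. if Adj (p0, c) y then ?g (p0, c) * ?g y else 0)"
    proof (rule sum_block[OF p0 Bc])
      fix x assume "x \<notin> Pair p0 ` B"
      hence "?g x = 0" by (rule off)
      thus "(\<Sum>y\<in>W. if Adj x y then ?g x * ?g y else 0) = 0" by (simp only: mult_zero_left if_cancel sum.neutral_const)
    qed
    also have "\<dots> = (\<Sum>c\<in>B. \<kappa> * real (card {t. t < d \<and> nb c t \<in> B}))"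
    proof (intro sum.cong refl)
      fix c assume c: "c \<in> B"
      have dc: "deep c" using c B by auto
      have finW: "finite W" using finV fincells by simp
      have "(\<Sum>y\<in>W. if Adj (p0, c) y then ?g (p0, c) * ?g y else 0)
          = (\<Sum>y\<in>{z \<in> W. Adj (p0, c) z}. ?g (p0, c) * ?g y)"
        using finW by (simp add: sum.inter_filter)
      also have "\<dots> = (\<Sum>y\<in>(\<lambda>t. (p0, nb c t)) ` {..<d}. ?g (p0, c) * ?g y)"
        unfolding deep_nbrs[OF p0 dc] ..
      also have "\<dots> = (\<Sum>t<d. ?g (p0, c) * ?g (p0, nb c t))"
        by (subst sum.reindex) (use nb_inj[of c] dc in \<open>auto simp: deep_def inj_on_def\<close>)
      also have "\<dots> = (\<Sum>t<d. if nb c t \<in> B then \<kappa> else 0)"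
        by (intro sum.cong refl) (use c hk in auto)
      also have "\<dots> = \<kappa> * real (card {t. t < d \<and> nb c t \<in> B})"
        by (simp add: sum.If_cases Int_def)
      finally show "(\<Sum>y\<in>W. if Adj (p0, c) y then ?g (p0, c) * ?g y else 0)
          = \<kappa> * real (card {t. t < d \<and> nb c t \<in> B})" .
    qed
    finally show ?thesis by (simp add: sum_distrib_left)
  qed
  show "Qf W Adj ?g = real d * card B - \<kappa> * (\<Sum>c\<in>B. real (card {t. t < d \<and> nb c t \<in> B}))"
    unfolding Qf_alt[OF graph_ok_gc] t1 t2 ..
  have "(\<Sum>x\<in>W. (?g x)\<^sup>2) = (\<Sum>c\<in>B. (?g (p0, c))\<^sup>2)"
    by (rule sum_block[OF p0 Bc]) (simp add: off)
  also have "\<dots> = (\<Sum>c\<in>B. 1)" by (intro sum.cong refl) (use h2 in auto)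
  finally show "(\<Sum>x\<in>W. (?g x)\<^sup>2) = card B" by simp
qed

lemma block_norm:
  fixes h :: "'c \<Rightarrow> real"
  assumes p0: "p0 \<in> V" and B: "B \<subseteq> {c. deep c}"
    and h2: "\<And>c. c \<in> B \<Longrightarrow> (h c)\<^sup>2 = 1"
  shows "(\<Sum>x\<in>W. (if fst x = p0 \<and> snd x \<in> B then h (snd x) else 0)\<^sup>2) = card B"
proof -
  let ?g = "\<lambda>x. if fst x = p0 \<and> snd x \<in> B then h (snd x) else 0"
  have Bc: "B \<subseteq> cells" using B unfolding deep_def by auto
  have off: "\<And>x. x \<notin> Pair p0 ` B \<Longrightarrow> ?g x = 0" by (auto simp: image_iff)
  have "(\<Sum>x\<in>W. (?g x)\<^sup>2) = (\<Sum>c\<in>B. (?g (p0, c))\<^sup>2)"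
    by (rule sum_block[OF p0 Bc]) (simp add: off)
  also have "\<dots> = (\<Sum>c\<in>B. 1)" by (intro sum.cong refl) (use h2 in auto)
  finally show ?thesis by simp
qed

definition bdry :: "'c set \<Rightarrow> real" where
  "bdry B = (\<Sum>c\<in>B. real (card {t. t < d \<and> nb c t \<notin> B}))"

lemma card_split_d: "real (card {t. t < d \<and> P t}) = real d - real (card {t. t < d \<and> \<not> P t})"
proof -
  have "card {t. t < d \<and> P t} + card {t. t < d \<and> \<not> P t} = card ({t. t < d \<and> P t} \<union> {t. t < d \<and> \<not> P t})"
    by (rule card_Un_disjoint[symmetric]) auto
  also have "{t. t < d \<and> P t} \<union> {t. t < d \<and> \<not> P t} = {..<d}" by auto
  finally show ?thesis by simp
qed

lemma gc_blocks:
  fixes Bs :: "nat \<Rightarrow> 'c set" and h :: "'c \<Rightarrow> real" and \<epsilon> :: real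
  assumes p0: "p0 \<in> V" and m: "1 \<le> m"
    and Bdeep: "\<And>j. j < m \<Longrightarrow> Bs j \<subseteq> {c. deep c}"
    and Bne: "\<And>j. j < m \<Longrightarrow> Bs j \<noteq> {}"
    and Bsep: "\<And>j j' c c'. j < m \<Longrightarrow> j' < m \<Longrightarrow> j \<noteq> j' \<Longrightarrow> c \<in> Bs j \<Longrightarrow> c' \<in> Bs j' \<Longrightarrow>
        c \<noteq> c' \<and> (\<forall>t<d. nb c t \<noteq> c')"
    and Bbd: "\<And>j. j < m \<Longrightarrow> bdry (Bs j) \<le> \<epsilon> * real (card (Bs j))"
    and h2: "\<And>c. deep c \<Longrightarrow> (h c)\<^sup>2 = 1"
    and hflip: "\<And>c t. deep c \<Longrightarrow> t < d \<Longrightarrow> h c * h (nb c t) = -1"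
  shows "lap_eig W Adj m \<le> \<epsilon>" and "real (2 * d) - \<epsilon> \<le> lap_eig W Adj (card W - m + 1)"
proof -
  have Qkey: "Qf W Adj (\<lambda>x. if fst x = p0 \<and> snd x \<in> Bs j then h' (snd x) else 0)
      = real d * card (Bs j) - \<kappa> * (real d * card (Bs j) - bdry (Bs j))"
    if j: "j < m" and h'2: "\<And>c. c \<in> Bs j \<Longrightarrow> (h' c)\<^sup>2 = 1"
      and hk: "\<And>c t. c \<in> Bs j \<Longrightarrow> t < d \<Longrightarrow> nb c t \<in> Bs j \<Longrightarrow> h' c * h' (nb c t) = \<kappa>"
    for j and h' :: "'c \<Rightarrow> real" and \<kappa>
  proof -
    have "(\<Sum>c\<in>Bs j. real (card {t. t < d \<and> nb c t \<in> Bs j}))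
        = (\<Sum>c\<in>Bs j. real d - real (card {t. t < d \<and> nb c t \<notin> Bs j}))"
      by (intro sum.cong refl card_split_d)
    also have "\<dots> = real d * card (Bs j) - bdry (Bs j)" unfolding bdry_def
      by (simp add: sum_subtractf)
    finally show ?thesis using block_fn(1)[OF p0 Bdeep[OF j] h'2 hk] by simp
  qed
  have Nkey: "(\<Sum>x\<in>W. (if fst x = p0 \<and> snd x \<in> Bs j then h' (snd x) else 0)\<^sup>2) = card (Bs j)"
    if j: "j < m" and h'2: "\<And>c. c \<in> Bs j \<Longrightarrow> (h' c)\<^sup>2 = 1" for j and h' :: "'c \<Rightarrow> real"
    by (rule block_norm[OF p0 Bdeep[OF j] h'2])
  have tf: "testfns W Adj m (\<lambda>j x. if fst x = p0 \<and> snd x \<in> Bs j then h' (snd x) else 0)"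
    if h'0: "\<And>c. deep c \<Longrightarrow> h' c \<noteq> 0" for h' :: "'c \<Rightarrow> real"
  proof
    show "graph_ok W Adj" by (rule graph_ok_gc)
    show "1 \<le> m" by (rule m)
  next
    fix j j' x y assume j: "j < m" and j': "j' < m" and ne: "j \<noteq> j'"
      and gx: "(if fst x = p0 \<and> snd x \<in> Bs j then h' (snd x) else 0) \<noteq> 0"
      and gy: "(if fst y = p0 \<and> snd y \<in> Bs j' then h' (snd y) else 0) \<noteq> 0"
    have x: "fst x = p0" "snd x \<in> Bs j" using gx by (auto split: if_splits)
    have y: "fst y = p0" "snd y \<in> Bs j'" using gy by (auto split: if_splits)
    have s: "snd x \<noteq> snd y" "\<forall>t<d. nb (snd x) t \<noteq> snd y" using Bsep[OF j j' ne x(2) y(2)] by auto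
    have dx: "deep (snd x)" using Bdeep[OF j] x by auto
    have "\<not> Adj (p0, snd x) y"
    proof
      assume "Adj (p0, snd x) y"
      then obtain t where "t < d" "y = (p0, nb (snd x) t)" using deep_adj[OF p0 dx] by blast
      thus False using s(2) by auto
    qed
    moreover have "x = (p0, snd x)" using x by (cases x) auto
    ultimately show "x \<noteq> y \<and> \<not> Adj x y" using s by auto
  next
    fix j x assume j: "j < m" and gx: "(if fst x = p0 \<and> snd x \<in> Bs j then h' (snd x) else 0) \<noteq> 0"
    have x: "fst x = p0" "snd x \<in> Bs j" using gx by (auto split: if_splits)
    have "snd x \<in> cells" using Bdeep[OF j] x unfolding deep_def by auto
    thus "x \<in> W" using x p0 by (cases x) auto
  next
    fix j assume j: "j < m"
    obtain c where c: "c \<in> Bs j" using Bne[OF j] by blast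
    have "deep c" using Bdeep[OF j] c by auto
    thus "\<exists>x. (if fst x = p0 \<and> snd x \<in> Bs j then h' (snd x) else 0) \<noteq> 0"
      using c h'0 by (intro exI[of _ "(p0, c)"]) auto
  qed
  show "lap_eig W Adj m \<le> \<epsilon>"
  proof (rule testfns.lower_end[OF tf])
    show "\<And>c. deep c \<Longrightarrow> (1::real) \<noteq> 0" by simp
  next
    fix j assume j: "j < m"
    have "Qf W Adj (\<lambda>x. if fst x = p0 \<and> snd x \<in> Bs j then (\<lambda>_. 1::real) (snd x) else 0) = bdry (Bs j)"
      using Qkey[OF j, of "\<lambda>_. 1" 1] by simp
    moreover have "(\<Sum>x\<in>W. (if fst x = p0 \<and> snd x \<in> Bs j then (\<lambda>_. 1::real) (snd x) else 0)\<^sup>2) = card (Bs j)"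
      using Nkey[OF j, of "\<lambda>_. 1"] by simp
    ultimately show "Qf W Adj (\<lambda>x. if fst x = p0 \<and> snd x \<in> Bs j then (\<lambda>_. 1::real) (snd x) else 0)
        \<le> \<epsilon> * (\<Sum>x\<in>W. (if fst x = p0 \<and> snd x \<in> Bs j then (\<lambda>_. 1::real) (snd x) else 0)\<^sup>2)"
      using Bbd[OF j] by simp
  qed
  show "real (2 * d) - \<epsilon> \<le> lap_eig W Adj (card W - m + 1)"
  proof (rule testfns.upper_end[OF tf])
    fix c assume "deep c"
    hence "(h c)\<^sup>2 = 1" by (rule h2)
    thus "h c \<noteq> 0" by auto
  next
    fix j assume j: "j < m"
    have hB2: "\<And>c. c \<in> Bs j \<Longrightarrow> (h c)\<^sup>2 = 1" using h2 Bdeep[OF j] by auto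
    have hBk: "\<And>c t. c \<in> Bs j \<Longrightarrow> t < d \<Longrightarrow> nb c t \<in> Bs j \<Longrightarrow> h c * h (nb c t) = -1"
      using hflip Bdeep[OF j] by auto
    have "Qf W Adj (\<lambda>x. if fst x = p0 \<and> snd x \<in> Bs j then h (snd x) else 0)
        = 2 * real d * card (Bs j) - bdry (Bs j)"
      using Qkey[where h'=h, OF j hB2 hBk] by simp
    moreover have "(\<Sum>x\<in>W. (if fst x = p0 \<and> snd x \<in> Bs j then h (snd x) else 0)\<^sup>2) = card (Bs j)"
      using Nkey[where h'=h, OF j hB2] by simp
    ultimately show "(real (2 * d) - \<epsilon>) * (\<Sum>x\<in>W. (if fst x = p0 \<and> snd x \<in> Bs j then h (snd x) else 0)\<^sup>2)
        \<le> Qf W Adj (\<lambda>x. if fst x = p0 \<and> snd x \<in> Bs j then h (snd x) else 0)"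
      using Bbd[OF j] by (simp add: algebra_simps)
  qed
qed

end

definition sq_nb :: "int \<times> int \<Rightarrow> nat \<Rightarrow> int \<times> int" where
  "sq_nb c t = (if t = 0 then (fst c, snd c - 1) else if t = 1 then (fst c + 1, snd c)
     else if t = 2 then (fst c, snd c + 1) else (fst c - 1, snd c))"

lemma sq_cells_mem: "(a, b) \<in> sq_cells k \<longleftrightarrow> 0 \<le> a \<and> a < int k \<and> 0 \<le> b \<and> b < int k"
  unfolding sq_cells_def by simp

lemma sq_gcdata:
  assumes "oriented_regular 4 V E rot"
  shows "gcdata 4 k V E rot (sq_cells k) sq_adj (sq_bnd k) sq_nb"
proof
  show "oriented_regular 4 V E rot" by fact
  show "finite (sq_cells k)"
    by (rule finite_subset[of _ "{0..<int k} \<times> {0..<int k}"]) (auto simp: sq_cells_def)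
  show "\<And>c c'. sq_adj c c' \<Longrightarrow> sq_adj c' c" unfolding sq_adj_def by auto
  show "\<And>c. \<not> sq_adj c c" unfolding sq_adj_def by auto
  show "\<And>c c'. c \<in> sq_cells k \<Longrightarrow> c' \<in> sq_cells k \<Longrightarrow> sq_adj c c' \<Longrightarrow> \<exists>t<4. c' = sq_nb c t"
  proof -
    fix c c' :: "int \<times> int" assume "sq_adj c c'"
    hence h: "\<bar>fst c - fst c'\<bar> + \<bar>snd c - snd c'\<bar> = 1" unfolding sq_adj_def .
    have "c' = sq_nb c 0 \<or> c' = sq_nb c 1 \<or> c' = sq_nb c 2 \<or> c' = sq_nb c 3"
      using h unfolding sq_nb_def by (cases c, cases c') (auto simp: abs_if split: if_splits)
    thus "\<exists>t<4. c' = sq_nb c t"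
    proof (elim disjE)
      assume "c' = sq_nb c 0" thus ?thesis by (intro exI[of _ 0]) auto
    next
      assume "c' = sq_nb c 1" thus ?thesis by (intro exI[of _ 1]) auto
    next
      assume "c' = sq_nb c 2" thus ?thesis by (intro exI[of _ 2]) auto
    next
      assume "c' = sq_nb c 3" thus ?thesis by (intro exI[of _ 3]) auto
    qed
  qed
  show "\<And>c t. c \<in> sq_cells k \<Longrightarrow> t < 4 \<Longrightarrow> sq_adj c (sq_nb c t)"
    unfolding sq_adj_def sq_nb_def by auto
  show "\<And>c. c \<in> sq_cells k \<Longrightarrow> inj_on (sq_nb c) {..<4}"
    unfolding inj_on_def sq_nb_def by (auto split: if_splits)
  show "\<And>c s i. c \<in> sq_cells k \<Longrightarrow> s < 4 \<Longrightarrow> i < k \<Longrightarrow> c = sq_bnd k s i \<Longrightarrow> sq_nb c s \<notin> sq_cells k"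
    unfolding sq_bnd_def sq_nb_def sq_cells_def by (auto split: if_splits)
  show "\<And>s i i'. s < 4 \<Longrightarrow> i < k \<Longrightarrow> i' < k \<Longrightarrow> sq_bnd k s i = sq_bnd k s i' \<Longrightarrow> i = i'"
    unfolding sq_bnd_def by (auto split: if_splits)
qed

definition sqblk :: "int \<Rightarrow> int \<Rightarrow> nat \<Rightarrow> (int \<times> int) set" where
  "sqblk a0 b0 R = {a0..<a0 + int R} \<times> {b0..<b0 + int R}"

lemma sqblk_card: "card (sqblk a0 b0 R) = R * R"
  unfolding sqblk_def by (simp add: card_cartesian_product)

lemma card_pair_le: "card {x, y :: int} \<le> 2"
  by (cases "x = y") auto

lemma sqblk_bdry:
  "(\<Sum>c\<in>sqblk a0 b0 R. real (card {t. t < 4 \<and> sq_nb c t \<notin> sqblk a0 b0 R})) \<le> 16 * real R"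
proof -
  let ?B = "sqblk a0 b0 R"
  let ?T = "int R - 1"
  define F where "F = ({a0, a0 + ?T} \<times> {b0..<b0 + int R}) \<union> ({a0..<a0 + int R} \<times> {b0, b0 + ?T})"
  have finF: "finite F" unfolding F_def by simp
  have cF: "card F \<le> 4 * R"
  proof -
    have "card F \<le> card ({a0, a0 + ?T} \<times> {b0..<b0 + int R}) + card ({a0..<a0 + int R} \<times> {b0, b0 + ?T})"
      unfolding F_def by (rule card_Un_le)
    also have "\<dots> \<le> 2 * R + R * 2"
      by (intro add_mono) (simp_all add: card_cartesian_product card_pair_le)
    finally show ?thesis by simp
  qed
  have pt: "real (card {t. t < 4 \<and> sq_nb c t \<notin> ?B}) \<le> (if c \<in> F then 4 else 0)" if c: "c \<in> ?B" for c
  proof (cases "c \<in> F")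
    case True
    define S where "S = {t. t < 4 \<and> sq_nb c t \<notin> ?B}"
    have "card S \<le> card {..<4::nat}" unfolding S_def by (intro card_mono) auto
    hence "real (card S) \<le> 4" by simp
    thus ?thesis unfolding S_def[symmetric] using True by simp
  next
    case False
    obtain a b where ab: "c = (a, b)" by (cases c)
    have "{t. t < 4 \<and> sq_nb c t \<notin> ?B} = {}"
      using c False unfolding ab sqblk_def F_def sq_nb_def by auto
    thus ?thesis using False by (simp only: card.empty) simp
  qed
  have "(\<Sum>c\<in>?B. real (card {t. t < 4 \<and> sq_nb c t \<notin> ?B})) \<le> (\<Sum>c\<in>?B. (if c \<in> F then 4 else 0))"
    by (intro sum_mono pt)
  also have "\<dots> = 4 * real (card (?B \<inter> F))"
    by (simp add: sum.If_cases sqblk_def)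
  also have "card (?B \<inter> F) \<le> card F" by (intro card_mono finF) auto
  finally show ?thesis using cF by simp
qed

lemma spread:
  fixes a a' M :: int and u u' :: nat
  assumes ne: "u \<noteq> u'" and M: "M = int R + 2"
    and a: "1 + int u * M \<le> a" "a < 1 + int u * M + int R"
    and a': "1 + int u' * M \<le> a'" "a' < 1 + int u' * M + int R"
  shows "2 \<le> \<bar>a - a'\<bar>"
proof (cases "u < u'")
  case True
  hence "(int u + 1) * M \<le> int u' * M" using M by (intro mult_right_mono) auto
  thus ?thesis using a a' M by (simp add: algebra_simps)
next
  case False
  hence "u' < u" using ne by simp
  hence "(int u' + 1) * M \<le> int u * M" using M by (intro mult_right_mono) auto
  thus ?thesis using a a' M by (simp add: algebra_simps)
qed

lemma div_mod_ne: "0 < (J::nat) \<Longrightarrow> j \<noteq> j' \<Longrightarrow> j div J \<noteq> j' div J \<or> j mod J \<noteq> j' mod J"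
  by (metis div_mult_mod_eq)

lemma V_ne: "oriented_regular d V E rot \<Longrightarrow> V \<noteq> {}"
  unfolding oriented_regular_def connected_graph_def by auto

context
  fixes k :: nat and V :: "'a::linorder set" and E :: "'a \<Rightarrow> 'a \<Rightarrow> bool" and rot :: "'a \<Rightarrow> nat \<Rightarrow> 'a"
  assumes orr4: "oriented_regular 4 V E rot"
begin

interpretation G: gcdata 4 k V E rot "sq_cells k" sq_adj "sq_bnd k" sq_nb
  by (rule sq_gcdata[OF orr4])

lemma sq_deep:
  assumes "1 \<le> a" "a + 2 \<le> int k" "1 \<le> b" "b + 2 \<le> int k"
  shows "G.deep (a, b)"
  unfolding G.deep_def
proof (intro conjI allI impI)
  show "(a, b) \<in> sq_cells k" using assms by (simp add: sq_cells_def)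
next
  fix s i :: nat assume "s < 4" "i < k"
  show "(a, b) \<noteq> sq_bnd k s i" using assms by (simp add: sq_bnd_def)
next
  fix t assume "t < (4::nat)"
  show "sq_nb (a, b) t \<in> sq_cells k" using assms by (simp add: sq_nb_def sq_cells_def)
qed

lemma sq_main:
  assumes R: "1 \<le> R" and m: "1 \<le> m" and mJ: "m \<le> (k div (2 * (R + 2)))\<^sup>2"
  shows "lap_eig (GC4_vertices k V) (GC4_adj k V rot) m \<le> 16 / real R"
    and "8 - 16 / real R \<le> lap_eig (GC4_vertices k V) (GC4_adj k V rot) (card (GC4_vertices k V) - m + 1)"
    and "m \<le> card (GC4_vertices k V)"
proof -
  define J where "J = k div (2 * (R + 2))"
  define M where "M = int R + 2"
  have WW: "GC4_vertices k V = G.W" unfolding GC4_vertices_def ..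
  have AA: "GC4_adj k V rot = G.Adj" unfolding GC4_adj_def ..
  have Jpos: "0 < J" using m mJ unfolding J_def by (cases "k div (2 * (R + 2))") auto
  have JMk: "int J * M \<le> int k"
  proof -
    have "J * (2 * (R + 2)) \<le> k" unfolding J_def by (rule div_times_less_eq_dividend)
    hence "J * (R + 2) \<le> k" by simp
    hence "int (J * (R + 2)) \<le> int k" by (simp only: of_nat_le_iff)
    thus ?thesis unfolding M_def by (simp add: algebra_simps)
  qed
  obtain p0 where p0: "p0 \<in> V" using V_ne[OF orr4] by blast
  define a0 where "a0 = (\<lambda>j. 1 + int (j div J) * M)"
  define b0 where "b0 = (\<lambda>j. 1 + int (j mod J) * M)"
  define Bs where "Bs = (\<lambda>j. sqblk (a0 j) (b0 j) R)"
  have uv: "j div J < J \<and> j mod J < J" if j: "j < m" for j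
  proof -
    have "j < J * J" using j mJ unfolding J_def power2_eq_square by simp
    thus ?thesis using Jpos by (simp add: less_mult_imp_div_less)
  qed
  have Bdeep: "Bs j \<subseteq> {c. G.deep c}" if j: "j < m" for j
  proof
    fix c assume c: "c \<in> Bs j"
    obtain a b where ab: "c = (a, b)" by (cases c)
    have ha: "a0 j \<le> a" "a < a0 j + int R" and hb: "b0 j \<le> b" "b < b0 j + int R"
      using c unfolding ab Bs_def sqblk_def by auto
    have u: "int (j div J) + 1 \<le> int J" "int (j mod J) + 1 \<le> int J" using uv[OF j] by auto
    have "(int (j div J) + 1) * M \<le> int J * M" using u M_def by (intro mult_right_mono) auto
    hence e1: "int (j div J) * M + M \<le> int J * M" by (simp add: distrib_right)
    have "(int (j mod J) + 1) * M \<le> int J * M" using u M_def by (intro mult_right_mono) auto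
    hence e2: "int (j mod J) * M + M \<le> int J * M" by (simp add: distrib_right)
    have n1: "0 \<le> int (j div J) * M" "0 \<le> int (j mod J) * M" using M_def by auto
    have "1 \<le> a \<and> a + 2 \<le> int k \<and> 1 \<le> b \<and> b + 2 \<le> int k"
      using ha hb JMk e1 e2 n1 M_def unfolding a0_def b0_def by linarith
    thus "c \<in> {c. G.deep c}" unfolding ab using sq_deep by auto
  qed
  have Bne: "Bs j \<noteq> {}" for j using R unfolding Bs_def sqblk_def by auto
  have Bsep: "c \<noteq> c' \<and> (\<forall>t<4. sq_nb c t \<noteq> c')"
    if j: "j < m" and j': "j' < m" and ne: "j \<noteq> j'" and c: "c \<in> Bs j" and c': "c' \<in> Bs j'" for j j' c c'
  proof -
    have far: "2 \<le> \<bar>fst c - fst c'\<bar> \<or> 2 \<le> \<bar>snd c - snd c'\<bar>"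
    proof (cases "j div J \<noteq> j' div J")
      case True
      show ?thesis
        by (rule disjI1, rule spread[OF True M_def]) (use c c' in \<open>auto simp: Bs_def sqblk_def a0_def\<close>)
    next
      case False
      hence "j mod J \<noteq> j' mod J" using div_mod_ne[OF Jpos ne] by simp
      show ?thesis
        by (rule disjI2, rule spread[OF \<open>j mod J \<noteq> j' mod J\<close> M_def]) (use c c' in \<open>auto simp: Bs_def sqblk_def b0_def\<close>)
    qed
    show ?thesis using far unfolding sq_nb_def by auto
  qed
  have Bbd: "G.bdry (Bs j) \<le> 16 / real R * card (Bs j)" for j
  proof -
    have "G.bdry (Bs j) \<le> 16 * real R" unfolding G.bdry_def Bs_def by (rule sqblk_bdry)
    also have "\<dots> = 16 / real R * card (Bs j)" using R unfolding Bs_def sqblk_card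
      by (simp add: field_simps)
    finally show ?thesis .
  qed
  define h where "h = (\<lambda>c::int \<times> int. if even (fst c + snd c) then 1 else (-1::real))"
  have h2: "(h c)\<^sup>2 = 1" for c unfolding h_def by simp
  have hflip: "h c * h (sq_nb c t) = -1" if "t < 4" for c t
  proof -
    have "even (fst (sq_nb c t) + snd (sq_nb c t)) \<longleftrightarrow> \<not> even (fst c + snd c)"
      unfolding sq_nb_def by (auto simp: algebra_simps)
    thus ?thesis unfolding h_def by auto
  qed
  note res = G.gc_blocks[OF p0 m Bdeep Bne Bsep Bbd h2 hflip]
  show "lap_eig (GC4_vertices k V) (GC4_adj k V rot) m \<le> 16 / real R" unfolding WW AA using res(1) .
  show "8 - 16 / real R \<le> lap_eig (GC4_vertices k V) (GC4_adj k V rot) (card (GC4_vertices k V) - m + 1)"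
    unfolding WW AA using res(2) by simp
  have inj: "inj_on (\<lambda>j. (p0, (a0 j, b0 j))) {..<m}"
  proof
    fix j j' assume j: "j \<in> {..<m}" and j': "j' \<in> {..<m}" and eq: "(p0, (a0 j, b0 j)) = (p0, (a0 j', b0 j'))"
    show "j = j'"
    proof (rule ccontr)
      assume ne: "j \<noteq> j'"
      have "(a0 j, b0 j) \<in> Bs j" "(a0 j', b0 j') \<in> Bs j'" using R unfolding Bs_def sqblk_def by auto
      thus False using Bsep[of j j'] j j' ne eq by auto
    qed
  qed
  have sub: "(\<lambda>j. (p0, (a0 j, b0 j))) ` {..<m} \<subseteq> G.W"
  proof
    fix x assume "x \<in> (\<lambda>j. (p0, (a0 j, b0 j))) ` {..<m}"
    then obtain j where j: "j < m" and x: "x = (p0, (a0 j, b0 j))" by auto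
    have "(a0 j, b0 j) \<in> Bs j" using R unfolding Bs_def sqblk_def by auto
    hence "G.deep (a0 j, b0 j)" using Bdeep[OF j] by auto
    thus "x \<in> G.W" using x p0 unfolding G.deep_def by auto
  qed
  have finW: "finite G.W" using G.finV G.fincells by simp
  show "m \<le> card (GC4_vertices k V)" unfolding WW
    using card_inj_on_le[OF inj sub finW] by simp
qed

end

definition tri_nb :: "int \<times> int \<times> bool \<Rightarrow> nat \<Rightarrow> int \<times> int \<times> bool" where
  "tri_nb c t = (case c of (a, b, u) \<Rightarrow>
     if u then (if t = 0 then (a + 1, b - 1, False) else if t = 1 then (a + 1, b, False) else (a, b, False))
     else (if t = 0 then (a, b, True) else if t = 1 then (a - 1, b, True) else (a - 1, b + 1, True)))"

lemma tri_nb_up: "tri_nb (a, b, True) t = (if t = 0 then (a + 1, b - 1, False) else if t = 1 then (a + 1, b, False) else (a, b, False))"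
  unfolding tri_nb_def by simp
lemma tri_nb_down: "tri_nb (a, b, False) t = (if t = 0 then (a, b, True) else if t = 1 then (a - 1, b, True) else (a - 1, b + 1, True))"
  unfolding tri_nb_def by simp

lemma tri_cells_up: "(a, b, True) \<in> tri_cells k \<longleftrightarrow> 0 \<le> a \<and> 0 \<le> b \<and> a + b + 1 \<le> int k"
  unfolding tri_cells_def tri_T_def by auto
lemma tri_cells_down: "(a, b, False) \<in> tri_cells k \<longleftrightarrow> 1 \<le> a \<and> 0 \<le> b \<and> a + b + 1 \<le> int k"
  unfolding tri_cells_def tri_T_def by auto

lemma tri_adj_nb:
  assumes "tri_adj c c'"
  shows "c' = tri_nb c 0 \<or> c' = tri_nb c 1 \<or> c' = tri_nb c 2"
proof -
  have ne: "c \<noteq> c'" and c2: "card (tri_verts c \<inter> tri_verts c') = 2" using assms unfolding tri_adj_def by auto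
  obtain x y where S: "tri_verts c \<inter> tri_verts c' = {x, y}" and "x \<noteq> y"
    using c2 card_2_iff[of "tri_verts c \<inter> tri_verts c'"] by blast
  hence xy: "x \<noteq> y" "x \<in> tri_verts c" "x \<in> tri_verts c'" "y \<in> tri_verts c" "y \<in> tri_verts c'"
    by blast+
  obtain a b u where c: "c = (a, b, u)" by (cases c)
  obtain a' b' u' where c': "c' = (a', b', u')" by (cases c')
  show ?thesis using xy ne unfolding c c'
    by (cases u; cases u') (auto simp: tri_nb_up tri_nb_down)
qed

lemma tri_adj_I: "c \<noteq> c' \<Longrightarrow> tri_verts c \<inter> tri_verts c' = {p, q} \<Longrightarrow> p \<noteq> q \<Longrightarrow> tri_adj c c'"
  unfolding tri_adj_def by simp

lemma tri_adj_nb_rev: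
  assumes "t < 3"
  shows "tri_adj c (tri_nb c t)"
proof -
  obtain a b u where c: "c = (a, b, u)" by (cases c)
  have t: "t = 0 \<or> t = 1 \<or> t = 2" using assms by auto
  show ?thesis
  proof (cases u)
    case True
    hence cT: "c = (a, b, True)" using c by simp
    from t show ?thesis
    proof (elim disjE)
      assume t0: "t = 0"
      show ?thesis unfolding cT tri_nb_up using t0
        by (simp, intro tri_adj_I[of _ _ "(a, b)" "(a + 1, b)"]) auto
    next
      assume t0: "t = 1"
      show ?thesis unfolding cT tri_nb_up using t0
        by (simp, intro tri_adj_I[of _ _ "(a + 1, b)" "(a, b + 1)"]) auto
    next
      assume t0: "t = 2"
      show ?thesis unfolding cT tri_nb_up using t0
        by (simp, intro tri_adj_I[of _ _ "(a, b)" "(a, b + 1)"]) auto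
    qed
  next
    case False
    hence cT: "c = (a, b, False)" using c by simp
    from t show ?thesis
    proof (elim disjE)
      assume t0: "t = 0"
      show ?thesis unfolding cT tri_nb_down using t0
        by (simp, intro tri_adj_I[of _ _ "(a, b)" "(a, b + 1)"]) auto
    next
      assume t0: "t = 1"
      show ?thesis unfolding cT tri_nb_down using t0
        by (simp, intro tri_adj_I[of _ _ "(a, b)" "(a - 1, b + 1)"]) auto
    next
      assume t0: "t = 2"
      show ?thesis unfolding cT tri_nb_down using t0
        by (simp, intro tri_adj_I[of _ _ "(a, b + 1)" "(a - 1, b + 1)"]) auto
    qed
  qed
qed

lemma tri_gcdata:
  assumes "oriented_regular 3 V E rot"
  shows "gcdata 3 k V E rot (tri_cells k) tri_adj (tri_bnd k) tri_nb"
proof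
  show "oriented_regular 3 V E rot" by fact
  show "finite (tri_cells k)"
  proof (rule finite_subset[of _ "{0..int k} \<times> {0..int k} \<times> UNIV"])
    show "tri_cells k \<subseteq> {0..int k} \<times> {0..int k} \<times> UNIV"
    proof
      fix c assume c: "c \<in> tri_cells k"
      obtain a b u where abu: "c = (a, b, u)" by (cases c)
      show "c \<in> {0..int k} \<times> {0..int k} \<times> UNIV"
        using c unfolding abu by (cases u) (auto simp: tri_cells_up tri_cells_down)
    qed
  qed simp
  show "\<And>c c'. tri_adj c c' \<Longrightarrow> tri_adj c' c" unfolding tri_adj_def by (auto simp: Int_commute)
  show "\<And>c. \<not> tri_adj c c" unfolding tri_adj_def by auto
  show "\<And>c c'. c \<in> tri_cells k \<Longrightarrow> c' \<in> tri_cells k \<Longrightarrow> tri_adj c c' \<Longrightarrow> \<exists>t<3. c' = tri_nb c t"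
  proof -
    fix c c' assume "tri_adj c c'"
    hence "c' = tri_nb c 0 \<or> c' = tri_nb c 1 \<or> c' = tri_nb c 2" by (rule tri_adj_nb)
    thus "\<exists>t<3. c' = tri_nb c t"
    proof (elim disjE)
      assume "c' = tri_nb c 0" thus ?thesis by (intro exI[of _ 0]) auto
    next
      assume "c' = tri_nb c 1" thus ?thesis by (intro exI[of _ 1]) auto
    next
      assume "c' = tri_nb c 2" thus ?thesis by (intro exI[of _ 2]) auto
    qed
  qed
  show "\<And>c t. c \<in> tri_cells k \<Longrightarrow> t < 3 \<Longrightarrow> tri_adj c (tri_nb c t)" by (rule tri_adj_nb_rev)
  show "\<And>c. c \<in> tri_cells k \<Longrightarrow> inj_on (tri_nb c) {..<3}"
  proof -
    fix c :: "int \<times> int \<times> bool"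
    obtain a b u where c: "c = (a, b, u)" by (cases c)
    show "inj_on (tri_nb c) {..<3}" unfolding c inj_on_def
      by (cases u) (auto simp: tri_nb_up tri_nb_down split: if_splits)
  qed
  show "\<And>c s i. c \<in> tri_cells k \<Longrightarrow> s < 3 \<Longrightarrow> i < k \<Longrightarrow> c = tri_bnd k s i \<Longrightarrow> tri_nb c s \<notin> tri_cells k"
  proof -
    fix c s i assume s: "s < (3::nat)" and i: "i < k" and c: "c = tri_bnd k s i"
    have "s = 0 \<or> s = 1 \<or> s = 2" using s by auto
    thus "tri_nb c s \<notin> tri_cells k"
    proof (elim disjE)
      assume "s = 0" thus ?thesis using c by (simp add: tri_bnd_def tri_nb_up tri_cells_down)
    next
      assume "s = 1" thus ?thesis using c by (simp add: tri_bnd_def tri_nb_up tri_cells_down)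
    next
      assume "s = 2" thus ?thesis using c by (simp add: tri_bnd_def tri_nb_up tri_cells_down)
    qed
  qed
  show "\<And>s i i'. s < 3 \<Longrightarrow> i < k \<Longrightarrow> i' < k \<Longrightarrow> tri_bnd k s i = tri_bnd k s i' \<Longrightarrow> i = i'"
    unfolding tri_bnd_def by (auto split: if_splits)
qed

definition triblk :: "int \<Rightarrow> int \<Rightarrow> nat \<Rightarrow> (int \<times> int \<times> bool) set" where
  "triblk a0 b0 R = {a0..<a0 + int R} \<times> {b0..<b0 + int R} \<times> UNIV"

lemma triblk_card: "card (triblk a0 b0 R) = R * R * 2"
  unfolding triblk_def by (simp add: card_cartesian_product)

lemma triblk_bdry:
  "(\<Sum>c\<in>triblk a0 b0 R. real (card {t. t < 3 \<and> tri_nb c t \<notin> triblk a0 b0 R})) \<le> 24 * real R"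
proof -
  let ?B = "triblk a0 b0 R"
  let ?T = "int R - 1"
  define F where "F = ({a0, a0 + ?T} \<times> {b0..<b0 + int R} \<times> (UNIV :: bool set)) \<union> ({a0..<a0 + int R} \<times> {b0, b0 + ?T} \<times> (UNIV :: bool set))"
  have finF: "finite F" unfolding F_def by simp
  have cF: "card F \<le> 8 * R"
  proof -
    have "card F \<le> card ({a0, a0 + ?T} \<times> {b0..<b0 + int R} \<times> (UNIV :: bool set)) + card ({a0..<a0 + int R} \<times> {b0, b0 + ?T} \<times> (UNIV :: bool set))"
      unfolding F_def by (rule card_Un_le)
    also have "\<dots> \<le> 2 * R * 2 + R * 2 * 2"
      by (intro add_mono) (simp_all add: card_cartesian_product card_pair_le)
    finally show ?thesis by simp
  qed
  have pt: "real (card {t. t < 3 \<and> tri_nb c t \<notin> ?B}) \<le> (if c \<in> F then 3 else 0)" if c: "c \<in> ?B" for c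
  proof (cases "c \<in> F")
    case True
    define S where "S = {t. t < 3 \<and> tri_nb c t \<notin> ?B}"
    have "card S \<le> card {..<3::nat}" unfolding S_def by (intro card_mono) auto
    hence "real (card S) \<le> 3" by simp
    thus ?thesis unfolding S_def[symmetric] using True by simp
  next
    case False
    obtain a b u where ab: "c = (a, b, u)" by (cases c)
    have "{t. t < 3 \<and> tri_nb c t \<notin> ?B} = {}"
      using c False unfolding ab triblk_def F_def tri_nb_def by auto
    thus ?thesis using False by (simp only: card.empty) simp
  qed
  have "(\<Sum>c\<in>?B. real (card {t. t < 3 \<and> tri_nb c t \<notin> ?B})) \<le> (\<Sum>c\<in>?B. (if c \<in> F then 3 else 0))"
    by (intro sum_mono pt)
  also have "\<dots> = 3 * real (card (?B \<inter> F))"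
    by (simp add: sum.If_cases triblk_def)
  also have "card (?B \<inter> F) \<le> card F" by (intro card_mono finF) auto
  finally show ?thesis using cF by simp
qed

context
  fixes k :: nat and V :: "'a::linorder set" and E :: "'a \<Rightarrow> 'a \<Rightarrow> bool" and rot :: "'a \<Rightarrow> nat \<Rightarrow> 'a"
  assumes orr3: "oriented_regular 3 V E rot"
begin

interpretation G: gcdata 3 k V E rot "tri_cells k" tri_adj "tri_bnd k" tri_nb
  by (rule tri_gcdata[OF orr3])

lemma tri_deep:
  assumes "1 \<le> a" "1 \<le> b" "a + b + 2 \<le> int k"
  shows "G.deep (a, b, u)"
  unfolding G.deep_def
proof (intro conjI allI impI)
  show "(a, b, u) \<in> tri_cells k" using assms by (cases u) (simp_all add: tri_cells_up tri_cells_down)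
next
  fix s i :: nat assume "s < 3" "i < k"
  show "(a, b, u) \<noteq> tri_bnd k s i" using assms by (simp add: tri_bnd_def)
next
  fix t assume "t < (3::nat)"
  show "tri_nb (a, b, u) t \<in> tri_cells k" using assms
    by (cases u) (simp_all add: tri_nb_up tri_nb_down tri_cells_up tri_cells_down)
qed

lemma tri_main:
  assumes R: "1 \<le> R" and m: "1 \<le> m" and mJ: "m \<le> (k div (2 * (R + 2)))\<^sup>2"
  shows "lap_eig (GC3_vertices k V) (GC3_adj k V rot) m \<le> 12 / real R"
    and "6 - 12 / real R \<le> lap_eig (GC3_vertices k V) (GC3_adj k V rot) (card (GC3_vertices k V) - m + 1)"
    and "m \<le> card (GC3_vertices k V)"
proof -
  define J where "J = k div (2 * (R + 2))"
  define M where "M = int R + 2"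
  have WW: "GC3_vertices k V = G.W" unfolding GC3_vertices_def ..
  have AA: "GC3_adj k V rot = G.Adj" unfolding GC3_adj_def ..
  have Jpos: "0 < J" using m mJ unfolding J_def by (cases "k div (2 * (R + 2))") auto
  have JMk: "2 * (int J * M) \<le> int k"
  proof -
    have "J * (2 * (R + 2)) \<le> k" unfolding J_def by (rule div_times_less_eq_dividend)
    hence "int (J * (2 * (R + 2))) \<le> int k" by (simp only: of_nat_le_iff)
    thus ?thesis unfolding M_def by (simp add: algebra_simps)
  qed
  obtain p0 where p0: "p0 \<in> V" using V_ne[OF orr3] by blast
  define a0 where "a0 = (\<lambda>j. 1 + int (j div J) * M)"
  define b0 where "b0 = (\<lambda>j. 1 + int (j mod J) * M)"
  define Bs where "Bs = (\<lambda>j. triblk (a0 j) (b0 j) R)"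
  have uv: "j div J < J \<and> j mod J < J" if j: "j < m" for j
  proof -
    have "j < J * J" using j mJ unfolding J_def power2_eq_square by simp
    thus ?thesis using Jpos by (simp add: less_mult_imp_div_less)
  qed
  have Bdeep: "Bs j \<subseteq> {c. G.deep c}" if j: "j < m" for j
  proof
    fix c assume c: "c \<in> Bs j"
    obtain a b u where ab: "c = (a, b, u)" by (cases c)
    have ha: "a0 j \<le> a" "a < a0 j + int R" and hb: "b0 j \<le> b" "b < b0 j + int R"
      using c unfolding ab Bs_def triblk_def by auto
    have u: "int (j div J) + 1 \<le> int J" "int (j mod J) + 1 \<le> int J" using uv[OF j] by auto
    have "(int (j div J) + 1) * M \<le> int J * M" using u M_def by (intro mult_right_mono) auto
    hence e1: "int (j div J) * M + M \<le> int J * M" by (simp add: distrib_right)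
    have "(int (j mod J) + 1) * M \<le> int J * M" using u M_def by (intro mult_right_mono) auto
    hence e2: "int (j mod J) * M + M \<le> int J * M" by (simp add: distrib_right)
    have n1: "0 \<le> int (j div J) * M" "0 \<le> int (j mod J) * M" using M_def by auto
    have "1 \<le> a \<and> 1 \<le> b \<and> a + b + 2 \<le> int k"
      using ha hb JMk e1 e2 n1 M_def unfolding a0_def b0_def by linarith
    thus "c \<in> {c. G.deep c}" unfolding ab using tri_deep by auto
  qed
  have Bne: "Bs j \<noteq> {}" for j using R unfolding Bs_def triblk_def by auto
  have Bsep: "c \<noteq> c' \<and> (\<forall>t<3. tri_nb c t \<noteq> c')"
    if j: "j < m" and j': "j' < m" and ne: "j \<noteq> j'" and c: "c \<in> Bs j" and c': "c' \<in> Bs j'" for j j' c c'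
  proof -
    have far: "2 \<le> \<bar>fst c - fst c'\<bar> \<or> 2 \<le> \<bar>fst (snd c) - fst (snd c')\<bar>"
    proof (cases "j div J \<noteq> j' div J")
      case True
      show ?thesis
        by (rule disjI1, rule spread[OF True M_def]) (use c c' in \<open>auto simp: Bs_def triblk_def a0_def\<close>)
    next
      case False
      hence "j mod J \<noteq> j' mod J" using div_mod_ne[OF Jpos ne] by simp
      show ?thesis
        by (rule disjI2, rule spread[OF \<open>j mod J \<noteq> j' mod J\<close> M_def]) (use c c' in \<open>auto simp: Bs_def triblk_def b0_def\<close>)
    qed
    obtain a b u where ab: "c = (a, b, u)" by (cases c)
    show ?thesis using far unfolding ab by (cases u) (auto simp: tri_nb_up tri_nb_down)
  qed
  have Bbd: "G.bdry (Bs j) \<le> 12 / real R * real (card (Bs j))" for j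
  proof -
    have "G.bdry (Bs j) \<le> 24 * real R" unfolding G.bdry_def Bs_def by (rule triblk_bdry)
    also have "\<dots> = 12 / real R * real (card (Bs j))" using R unfolding Bs_def triblk_card
      by (simp add: field_simps)
    finally show ?thesis .
  qed
  define h where "h = (\<lambda>c::int \<times> int \<times> bool. if snd (snd c) then 1 else (-1::real))"
  have h2: "(h c)\<^sup>2 = 1" for c unfolding h_def by simp
  have hflip: "h c * h (tri_nb c t) = -1" for c t
  proof -
    obtain a b u where ab: "c = (a, b, u)" by (cases c)
    show ?thesis unfolding h_def ab by (cases u) (simp_all add: tri_nb_up tri_nb_down)
  qed
  note res = G.gc_blocks[OF p0 m Bdeep Bne Bsep Bbd h2 hflip]
  show "lap_eig (GC3_vertices k V) (GC3_adj k V rot) m \<le> 12 / real R" unfolding WW AA using res(1) .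
  show "6 - 12 / real R \<le> lap_eig (GC3_vertices k V) (GC3_adj k V rot) (card (GC3_vertices k V) - m + 1)"
    unfolding WW AA using res(2) by simp
  have inj: "inj_on (\<lambda>j. (p0, (a0 j, b0 j, True))) {..<m}"
  proof
    fix j j' assume j: "j \<in> {..<m}" and j': "j' \<in> {..<m}" and eq: "(p0, (a0 j, b0 j, True)) = (p0, (a0 j', b0 j', True))"
    show "j = j'"
    proof (rule ccontr)
      assume ne: "j \<noteq> j'"
      have m1: "(a0 j, b0 j, True) \<in> Bs j" and m2: "(a0 j', b0 j', True) \<in> Bs j'"
        using R unfolding Bs_def triblk_def by auto
      have "(a0 j, b0 j, True) \<noteq> (a0 j', b0 j', True)" using Bsep[OF _ _ ne m1 m2] j j' by auto
      thus False using eq by simp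
    qed
  qed
  have sub: "(\<lambda>j. (p0, (a0 j, b0 j, True))) ` {..<m} \<subseteq> G.W"
  proof
    fix x assume "x \<in> (\<lambda>j. (p0, (a0 j, b0 j, True))) ` {..<m}"
    then obtain j where j: "j < m" and x: "x = (p0, (a0 j, b0 j, True))" by auto
    have "(a0 j, b0 j, True) \<in> Bs j" using R unfolding Bs_def triblk_def by auto
    hence "G.deep (a0 j, b0 j, True)" using Bdeep[OF j] by auto
    thus "x \<in> G.W" using x p0 unfolding G.deep_def by auto
  qed
  have finW: "finite G.W" using G.finV G.fincells by simp
  show "m \<le> card (GC3_vertices k V)" unfolding WW
    using card_inj_on_le[OF inj sub finW] by simp
qed

end

lemma J_lower:
  fixes k M :: nat
  assumes M: "0 < M" and k: "4 * M \<le> k"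
  shows "real k / (4 * real M) \<le> real (k div (2 * M))"
proof -
  have r: "k mod (2 * M) < 2 * M" using M by simp
  have q: "k = k div (2 * M) * (2 * M) + k mod (2 * M)" by (rule div_mult_mod_eq[symmetric])
  have e: "(k div (2 * M) + 1) * (2 * M) = k div (2 * M) * (2 * M) + 2 * M" by (simp add: distrib_right)
  have "k < (k div (2 * M) + 1) * (2 * M)" using r q e by linarith
  hence "real k < real ((k div (2 * M) + 1) * (2 * M))" by (simp only: of_nat_less_iff)
  hence "real k < (real (k div (2 * M)) + 1) * (2 * real M)" by (simp add: algebra_simps)
  hence a: "real k / (2 * real M) - 1 < real (k div (2 * M))" using M by (simp add: field_simps)
  have "real k / (4 * real M) \<ge> 1" using k M by (simp add: field_simps)
  hence "real k / (4 * real M) \<le> real k / (2 * real M) - 1" using M by (simp add: field_simps)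
  thus ?thesis using a by linarith
qed

lemma limit_generic:
  fixes lo hi :: "nat \<Rightarrow> real" and m :: "nat \<Rightarrow> nat" and C L :: real
  assumes m_pos: "\<forall>k\<ge>1. 0 < m k"
    and m_lim: "(\<lambda>k. real (m k) / (real k)\<^sup>2) \<longlonglongrightarrow> 0"
    and C: "0 < C"
    and key: "\<And>R k. 1 \<le> R \<Longrightarrow> 1 \<le> k \<Longrightarrow> m k \<le> (k div (2 * (R + 2)))\<^sup>2 \<Longrightarrow>
       0 \<le> lo k \<and> lo k \<le> C / real R \<and> L - C / real R \<le> hi k \<and> hi k \<le> L"
  shows "lo \<longlonglongrightarrow> 0" and "hi \<longlonglongrightarrow> L"
proof -
  have main: "\<exists>no. \<forall>k\<ge>no. \<bar>lo k\<bar> < r \<and> \<bar>hi k - L\<bar> < r" if r: "0 < r" for r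
  proof -
    define R where "R = nat \<lceil>2 * C / r\<rceil> + 1"
    have R1: "1 \<le> R" unfolding R_def by simp
    have "2 * C / r \<le> real R" unfolding R_def by linarith
    hence "2 * C \<le> real R * r" using r by (simp add: field_simps)
    hence CR: "C / real R < r" using R1 r C by (simp add: field_simps)
    define M where "M = R + 2"
    have M0: "0 < M" unfolding M_def by simp
    define \<delta> where "\<delta> = 1 / (16 * (real M)\<^sup>2)"
    have \<delta>: "0 < \<delta>" unfolding \<delta>_def using M0 by simp
    obtain no where no: "\<forall>k\<ge>no. norm (real (m k) / (real k)\<^sup>2 - 0) < \<delta>"
      using LIMSEQ_D[OF m_lim \<delta>] by blast
    show ?thesis
    proof (intro exI allI impI)
      fix k assume kk: "max no (max 1 (4 * M)) \<le> k"
      hence k1: "1 \<le> k" and k4: "4 * M \<le> k" and kno: "no \<le> k" by auto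
      have kpos: "0 < real k" using k1 by simp
      have "real (m k) / (real k)\<^sup>2 < \<delta>" using no kno by auto
      hence mk: "real (m k) < \<delta> * (real k)\<^sup>2" using kpos by (simp add: field_simps)
      have Jl: "real k / (4 * real M) \<le> real (k div (2 * M))" by (rule J_lower[OF M0 k4])
      have "0 \<le> real k / (4 * real M)" by simp
      hence "(real k / (4 * real M))\<^sup>2 \<le> (real (k div (2 * M)))\<^sup>2" using Jl by (intro power_mono) auto
      moreover have "\<delta> * (real k)\<^sup>2 = (real k / (4 * real M))\<^sup>2" unfolding \<delta>_def
        by (simp add: field_simps power2_eq_square)
      moreover have "real ((k div (2 * M))\<^sup>2) = (real (k div (2 * M)))\<^sup>2" by simp
      ultimately have "real (m k) \<le> real ((k div (2 * M))\<^sup>2)" using mk by linarith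
      hence mJ: "m k \<le> (k div (2 * (R + 2)))\<^sup>2" unfolding M_def by (simp only: of_nat_le_iff)
      from key[OF R1 k1 mJ] have "0 \<le> lo k" "lo k \<le> C / real R" "L - C / real R \<le> hi k" "hi k \<le> L"
        by auto
      thus "\<bar>lo k\<bar> < r \<and> \<bar>hi k - L\<bar> < r" using CR by linarith
    qed
  qed
  show "lo \<longlonglongrightarrow> 0"
  proof (rule LIMSEQ_I)
    fix r :: real assume "0 < r"
    then obtain no where "\<forall>k\<ge>no. \<bar>lo k\<bar> < r \<and> \<bar>hi k - L\<bar> < r" using main by blast
    thus "\<exists>no. \<forall>k\<ge>no. norm (lo k - 0) < r" by auto
  qed
  show "hi \<longlonglongrightarrow> L"
  proof (rule LIMSEQ_I)
    fix r :: real assume "0 < r"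
    then obtain no where "\<forall>k\<ge>no. \<bar>lo k\<bar> < r \<and> \<bar>hi k - L\<bar> < r" using main by blast
    thus "\<exists>no. \<forall>k\<ge>no. norm (hi k - L) < r" by auto
  qed
qed

lemma (in gcdata) eig_bounds:
  "i < card W \<Longrightarrow> 0 \<le> lap_eigs W Adj ! i \<and> lap_eigs W Adj ! i \<le> 2 * real d"
  using lap_eigs_props(3)[OF graph_ok_gc deg_le] by blast

lemma case3:
  fixes V :: "'a::linorder set" and E :: "'a \<Rightarrow> 'a \<Rightarrow> bool"
    and rot :: "'a \<Rightarrow> nat \<Rightarrow> 'a" and m :: "nat \<Rightarrow> nat"
  assumes m_pos: "\<forall>k\<ge>1. 0 < m k"
    and m_lim: "(\<lambda>k. real (m k) / (real k)\<^sup>2) \<longlonglongrightarrow> 0"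
    and orr: "oriented_regular 3 V E rot"
  shows "((\<lambda>k. lap_eig (GC3_vertices k V) (GC3_adj k V rot) (m k)) \<longlonglongrightarrow> 0) \<and>
           ((\<lambda>k. lap_eig (GC3_vertices k V) (GC3_adj k V rot)
                   (card (GC3_vertices k V) - m k + 1)) \<longlonglongrightarrow> 6)"
proof -
  have key: "0 \<le> lap_eig (GC3_vertices k V) (GC3_adj k V rot) (m k) \<and>
      lap_eig (GC3_vertices k V) (GC3_adj k V rot) (m k) \<le> 12 / real R \<and>
      6 - 12 / real R \<le> lap_eig (GC3_vertices k V) (GC3_adj k V rot) (card (GC3_vertices k V) - m k + 1) \<and>
      lap_eig (GC3_vertices k V) (GC3_adj k V rot) (card (GC3_vertices k V) - m k + 1) \<le> 6"
    if R: "1 \<le> R" and k: "1 \<le> k" and mJ: "m k \<le> (k div (2 * (R + 2)))\<^sup>2" for R k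
  proof -
    have m1: "1 \<le> m k" using m_pos k by auto
    note tm = tri_main[OF orr R m1 mJ]
    have G: "gcdata 3 k V E rot (tri_cells k) tri_adj (tri_bnd k) tri_nb" by (rule tri_gcdata[OF orr])
    have WW: "GC3_vertices k V = V \<times> tri_cells k" unfolding GC3_vertices_def ..
    have AA: "GC3_adj k V rot = gc_adj 3 k V rot (tri_cells k) tri_adj (tri_bnd k)" unfolding GC3_adj_def ..
    note eb = gcdata.eig_bounds[OF G, folded WW AA]
    have i1: "m k - 1 < card (GC3_vertices k V)" using tm(3) m1 by simp
    have i2: "card (GC3_vertices k V) - m k < card (GC3_vertices k V)" using tm(3) m1 by simp
    have "0 \<le> lap_eig (GC3_vertices k V) (GC3_adj k V rot) (m k)"
      unfolding lap_eig_def using eb[OF i1] by simp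
    moreover have "lap_eig (GC3_vertices k V) (GC3_adj k V rot) (card (GC3_vertices k V) - m k + 1) \<le> 6"
      unfolding lap_eig_def using eb[OF i2] by simp
    ultimately show ?thesis using tm(1,2) by simp
  qed
  show ?thesis
    using limit_generic[OF m_pos m_lim, of 12 "\<lambda>k. lap_eig (GC3_vertices k V) (GC3_adj k V rot) (m k)" 6
        "\<lambda>k. lap_eig (GC3_vertices k V) (GC3_adj k V rot) (card (GC3_vertices k V) - m k + 1)"] key
    by simp
qed

lemma case4:
  fixes V :: "'a::linorder set" and E :: "'a \<Rightarrow> 'a \<Rightarrow> bool"
    and rot :: "'a \<Rightarrow> nat \<Rightarrow> 'a" and m :: "nat \<Rightarrow> nat"
  assumes m_pos: "\<forall>k\<ge>1. 0 < m k"
    and m_lim: "(\<lambda>k. real (m k) / (real k)\<^sup>2) \<longlonglongrightarrow> 0"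
    and orr: "oriented_regular 4 V E rot"
  shows "((\<lambda>k. lap_eig (GC4_vertices k V) (GC4_adj k V rot) (m k)) \<longlonglongrightarrow> 0) \<and>
           ((\<lambda>k. lap_eig (GC4_vertices k V) (GC4_adj k V rot)
                   (card (GC4_vertices k V) - m k + 1)) \<longlonglongrightarrow> 8)"
proof -
  have key: "0 \<le> lap_eig (GC4_vertices k V) (GC4_adj k V rot) (m k) \<and>
      lap_eig (GC4_vertices k V) (GC4_adj k V rot) (m k) \<le> 16 / real R \<and>
      8 - 16 / real R \<le> lap_eig (GC4_vertices k V) (GC4_adj k V rot) (card (GC4_vertices k V) - m k + 1) \<and>
      lap_eig (GC4_vertices k V) (GC4_adj k V rot) (card (GC4_vertices k V) - m k + 1) \<le> 8"
    if R: "1 \<le> R" and k: "1 \<le> k" and mJ: "m k \<le> (k div (2 * (R + 2)))\<^sup>2" for R k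
  proof -
    have m1: "1 \<le> m k" using m_pos k by auto
    note tm = sq_main[OF orr R m1 mJ]
    have G: "gcdata 4 k V E rot (sq_cells k) sq_adj (sq_bnd k) sq_nb" by (rule sq_gcdata[OF orr])
    have WW: "GC4_vertices k V = V \<times> sq_cells k" unfolding GC4_vertices_def ..
    have AA: "GC4_adj k V rot = gc_adj 4 k V rot (sq_cells k) sq_adj (sq_bnd k)" unfolding GC4_adj_def ..
    note eb = gcdata.eig_bounds[OF G, folded WW AA]
    have i1: "m k - 1 < card (GC4_vertices k V)" using tm(3) m1 by simp
    have i2: "card (GC4_vertices k V) - m k < card (GC4_vertices k V)" using tm(3) m1 by simp
    have "0 \<le> lap_eig (GC4_vertices k V) (GC4_adj k V rot) (m k)"
      unfolding lap_eig_def using eb[OF i1] by simp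
    moreover have "lap_eig (GC4_vertices k V) (GC4_adj k V rot) (card (GC4_vertices k V) - m k + 1) \<le> 8"
      unfolding lap_eig_def using eb[OF i2] by simp
    ultimately show ?thesis using tm(1,2) by simp
  qed
  show ?thesis
    using limit_generic[OF m_pos m_lim, of 16 "\<lambda>k. lap_eig (GC4_vertices k V) (GC4_adj k V rot) (m k)" 8
        "\<lambda>k. lap_eig (GC4_vertices k V) (GC4_adj k V rot) (card (GC4_vertices k V) - m k + 1)"] key
    by simp
qed

theorem theorem1p1:
  fixes V :: "'a::linorder set" and E :: "'a \<Rightarrow> 'a \<Rightarrow> bool"
    and rot :: "'a \<Rightarrow> nat \<Rightarrow> 'a" and m :: "nat \<Rightarrow> nat"
  assumes m_pos: "\<forall>k\<ge>1. 0 < m k"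
    and m_lim: "(\<lambda>k. real (m k) / (real k)\<^sup>2) \<longlonglongrightarrow> 0"
  shows "(oriented_regular 3 V E rot \<longrightarrow>
           ((\<lambda>k. lap_eig (GC3_vertices k V) (GC3_adj k V rot) (m k)) \<longlonglongrightarrow> 0) \<and>
           ((\<lambda>k. lap_eig (GC3_vertices k V) (GC3_adj k V rot)
                   (card (GC3_vertices k V) - m k + 1)) \<longlonglongrightarrow> 6))
       \<and> (oriented_regular 4 V E rot \<longrightarrow>
           ((\<lambda>k. lap_eig (GC4_vertices k V) (GC4_adj k V rot) (m k)) \<longlonglongrightarrow> 0) \<and>
           ((\<lambda>k. lap_eig (GC4_vertices k V) (GC4_adj k V rot)
                   (card (GC4_vertices k V) - m k + 1)) \<longlonglongrightarrow> 8))"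
  using case3[OF m_pos m_lim] case4[OF m_pos m_lim] by blast


end
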